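(* Let $U$ be an almost periodic unitary operator on a Hilbert space $\mathcal H$. Then for every $k\ge1$, every pair-partition $\alpha:\{1,\dots,2k\}\to\{1,\dots,k\}$ and all $A_1,\dots,A_{2k-1}\in\mathcal B(\mathcal H)$, $$\mathop{\mathrm{s\text{-}lim}}_{N\to\infty}\frac{1}{N^k}\sum_{n_1,\dots,n_k=0}^{N-1}U^{n_{\alpha(1)}}A_1U^{n_{\alpha(2)}}A_2\cdots U^{n_{\alpha(2k-1)}}A_{2k-1}U^{n_{\alpha(2k)}}=S_{\alpha;A_1,\dots,A_{2k-1}},$$ the limit being in the strong operator topology.
   Context: A unitary $U$ on $\mathcal H$ is almost periodic if $\mathcal H$ is the closed linear span of the eigenvectors of $U$. For $z\in\mathbb T$, $E_z$ is the orthogonal projection onto $\{x: Ux=zx\}$, $\sigma_{\mathrm{pp}}(U)$ is the set of eigenvalues of $U$, and $\sigma^{\mathrm a}_{\mathrm{pp}}(U):=\{z\in\sigma_{\mathrm{pp}}(U): zw=1 \text{ for some } w\in\sigma_{\mathrm{pp}}(U)\}$. A pair-partition $\alpha:\{1,\dots,2k\}\to\{1,\dots,k\}$ is a surjection each of whose fibres $\alpha^{-1}(\{j\})$ has exactly two elements. Given $z_1,\dots,z_k\in\mathbb T$, put $z^\#_{\alpha(i)}:=z_j$ if $i$ is the smaller element of $\alpha^{-1}(\{j\})$ and $z^\#_{\alpha(i)}:=\bar z_j$ if $i$ is the larger one (e.g. for $\alpha=(1,2,1,2)$ the term is $E_{z}A_1E_{w}A_2E_{\bar z}A_3E_{\bar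 w}$). The operator $S_{\alpha;A_1,\dots,A_{2k-1}}$ is the weak-operator limit (which exists) of the net, indexed by finite subsets $F\subset\sigma^{\mathrm a}_{\mathrm{pp}}(U)$ ordered by inclusion, of the operators $\sum_{z_1,\dots,z_k\in F}E_{z^\#_{\alpha(1)}}A_1E_{z^\#_{\alpha(2)}}A_2\cdots E_{z^\#_{\alpha(2k-1)}}A_{2k-1}E_{z^\#_{\alpha(2k)}}$. *)

theory Defs
  imports "HOL-Analysis.Analysis"
begin

text \<open>A complex Hilbert space, given explicitly on a type 'a with its additive group
structure, a complex scalar multiplication sm and an inner product ip (linear in the
first argument, conjugate-linear in the second), complete for the induced norm.\<close>

definition hnorm :: "('a \<Rightarrow> 'a \<Rightarrow> complex) \<Rightarrow> 'a \<Rightarrow> real" where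
  "hnorm ip x = sqrt (Re (ip x x))"

definition hilbert_space ::
  "(complex \<Rightarrow> 'a::ab_group_add \<Rightarrow> 'a) \<Rightarrow> ('a \<Rightarrow> 'a \<Rightarrow> complex) \<Rightarrow> bool" where
  "hilbert_space sm ip \<longleftrightarrow>
     (\<forall>x. sm 1 x = x) \<and>
     (\<forall>a b x. sm (a * b) x = sm a (sm b x)) \<and>
     (\<forall>a x y. sm a (x + y) = sm a x + sm a y) \<and>
     (\<forall>a b x. sm (a + b) x = sm a x + sm b x) \<and>
     (\<forall>x y z. ip (x + y) z = ip x z + ip y z) \<and>
     (\<forall>a x y. ip (sm a x) y = a * ip x y) \<and>
     (\<forall>x y. ip y x = cnj (ip x y)) \<and>
     (\<forall>x. Im (ip x x) = 0 \<and> Re (ip x x) \<ge> 0) \<and>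
     (\<forall>x. ip x x = 0 \<longrightarrow> x = 0) \<and>
     (\<forall>X::nat \<Rightarrow> 'a. (\<forall>e>0. \<exists>M. \<forall>m\<ge>M. \<forall>n\<ge>M. hnorm ip (X m - X n) < e) \<longrightarrow>
        (\<exists>L. ((\<lambda>n. hnorm ip (X n - L)) \<longlongrightarrow> 0) sequentially))"

definition bounded_op ::
  "(complex \<Rightarrow> 'a::ab_group_add \<Rightarrow> 'a) \<Rightarrow> ('a \<Rightarrow> 'a \<Rightarrow> complex) \<Rightarrow> ('a \<Rightarrow> 'a) \<Rightarrow> bool" where
  "bounded_op sm ip T \<longleftrightarrow>
     (\<forall>x y. T (x + y) = T x + T y) \<and> (\<forall>a x. T (sm a x) = sm a (T x)) \<and>
     (\<exists>C. \<forall>x. hnorm ip (T x) \<le> C * hnorm ip x)"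

definition unitary_op ::
  "(complex \<Rightarrow> 'a::ab_group_add \<Rightarrow> 'a) \<Rightarrow> ('a \<Rightarrow> 'a \<Rightarrow> complex) \<Rightarrow> ('a \<Rightarrow> 'a) \<Rightarrow> bool" where
  "unitary_op sm ip U \<longleftrightarrow> bounded_op sm ip U \<and> surj U \<and> (\<forall>x y. ip (U x) (U y) = ip x y)"

definition eigenspace :: "(complex \<Rightarrow> 'a \<Rightarrow> 'a) \<Rightarrow> ('a \<Rightarrow> 'a) \<Rightarrow> complex \<Rightarrow> 'a set" where
  "eigenspace sm U z = {x. U x = sm z x}"

definition sigma_pp :: "(complex \<Rightarrow> 'a::zero \<Rightarrow> 'a) \<Rightarrow> ('a \<Rightarrow> 'a) \<Rightarrow> complex set" where
  "sigma_pp sm U = {z. \<exists>x. x \<noteq> 0 \<and> U x = sm z x}"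

definition sigma_pp_a :: "(complex \<Rightarrow> 'a::zero \<Rightarrow> 'a) \<Rightarrow> ('a \<Rightarrow> 'a) \<Rightarrow> complex set" where
  "sigma_pp_a sm U = {z \<in> sigma_pp sm U. \<exists>w \<in> sigma_pp sm U. z * w = 1}"

text \<open>Linear span (finite linear combinations) and almost periodicity:
  H is the closed linear span of the eigenvectors.\<close>
definition hspan :: "(complex \<Rightarrow> 'a::ab_group_add \<Rightarrow> 'a) \<Rightarrow> 'a set \<Rightarrow> 'a set" where
  "hspan sm S = {y. \<exists>I::nat set. \<exists>c v. finite I \<and> (\<forall>i\<in>I. v i \<in> S) \<and>
                     y = (\<Sum>i\<in>I. sm (c i) (v i))}"

definition almost_periodic ::
  "(complex \<Rightarrow> 'a::ab_group_add \<Rightarrow> 'a) \<Rightarrow> ('a \<Rightarrow> 'a \<Rightarrow> complex) \<Rightarrow> ('a \<Rightarrow> 'a) \<Rightarrow> bool" where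
  "almost_periodic sm ip U \<longleftrightarrow>
     (\<forall>x. \<forall>e>0. \<exists>y \<in> hspan sm {v. \<exists>z. U v = sm z v}. hnorm ip (x - y) < e)"

definition orth_proj :: "('a::ab_group_add \<Rightarrow> 'a \<Rightarrow> complex) \<Rightarrow> 'a set \<Rightarrow> 'a \<Rightarrow> 'a" where
  "orth_proj ip M x = (THE y. y \<in> M \<and> (\<forall>m\<in>M. ip (x - y) m = 0))"

definition Eproj ::
  "(complex \<Rightarrow> 'a::ab_group_add \<Rightarrow> 'a) \<Rightarrow> ('a \<Rightarrow> 'a \<Rightarrow> complex) \<Rightarrow> ('a \<Rightarrow> 'a) \<Rightarrow> complex \<Rightarrow> 'a \<Rightarrow> 'a" where
  "Eproj sm ip U z = orth_proj ip (eigenspace sm U z)"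

definition pair_partition :: "nat \<Rightarrow> (nat \<Rightarrow> nat) \<Rightarrow> bool" where
  "pair_partition k \<alpha> \<longleftrightarrow> \<alpha> ` {1..2*k} = {1..k} \<and>
     (\<forall>j\<in>{1..k}. card {i\<in>{1..2*k}. \<alpha> i = j} = 2)"

definition zsharp :: "nat \<Rightarrow> (nat \<Rightarrow> nat) \<Rightarrow> (nat \<Rightarrow> complex) \<Rightarrow> nat \<Rightarrow> complex" where
  "zsharp k \<alpha> z i = (if \<exists>j\<in>{1..2*k}. \<alpha> j = \<alpha> i \<and> i < j then z (\<alpha> i) else cnj (z (\<alpha> i)))"

fun alt :: "nat \<Rightarrow> (nat \<Rightarrow> 'a \<Rightarrow> 'a) \<Rightarrow> (nat \<Rightarrow> 'a \<Rightarrow> 'a) \<Rightarrow> 'a \<Rightarrow> 'a" where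
  "alt 0 B A = id"
| "alt (Suc m) B A = alt m B A \<circ> B (Suc m) \<circ> A (Suc m)"

definition word :: "nat \<Rightarrow> (nat \<Rightarrow> 'a \<Rightarrow> 'a) \<Rightarrow> (nat \<Rightarrow> 'a \<Rightarrow> 'a) \<Rightarrow> 'a \<Rightarrow> 'a" where
  "word k B A = alt (2*k - 1) B A \<circ> B (2*k)"

definition S_partial ::
  "(complex \<Rightarrow> 'a::ab_group_add \<Rightarrow> 'a) \<Rightarrow> ('a \<Rightarrow> 'a \<Rightarrow> complex) \<Rightarrow> ('a \<Rightarrow> 'a) \<Rightarrow> nat \<Rightarrow> (nat \<Rightarrow> nat)
    \<Rightarrow> (nat \<Rightarrow> 'a \<Rightarrow> 'a) \<Rightarrow> complex set \<Rightarrow> 'a \<Rightarrow> 'a" where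
  "S_partial sm ip U k \<alpha> A F x =
     (\<Sum>z \<in> PiE {1..k} (\<lambda>_. F). word k (\<lambda>i. Eproj sm ip U (zsharp k \<alpha> z i)) A x)"

definition S_op ::
  "(complex \<Rightarrow> 'a::ab_group_add \<Rightarrow> 'a) \<Rightarrow> ('a \<Rightarrow> 'a \<Rightarrow> complex) \<Rightarrow> ('a \<Rightarrow> 'a) \<Rightarrow> nat \<Rightarrow> (nat \<Rightarrow> nat)
    \<Rightarrow> (nat \<Rightarrow> 'a \<Rightarrow> 'a) \<Rightarrow> 'a \<Rightarrow> 'a" where
  "S_op sm ip U k \<alpha> A = (THE S. \<forall>x y.
     ((\<lambda>F. ip (S_partial sm ip U k \<alpha> A F x) y) \<longlongrightarrow> ip (S x) y)
       (finite_subsets_at_top (sigma_pp_a sm U)))"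

definition cesaro ::
  "(complex \<Rightarrow> 'a::ab_group_add \<Rightarrow> 'a) \<Rightarrow> ('a \<Rightarrow> 'a) \<Rightarrow> nat \<Rightarrow> (nat \<Rightarrow> nat)
    \<Rightarrow> (nat \<Rightarrow> 'a \<Rightarrow> 'a) \<Rightarrow> nat \<Rightarrow> 'a \<Rightarrow> 'a" where
  "cesaro sm U k \<alpha> A N x =
     sm (1 / of_nat N ^ k) (\<Sum>n \<in> PiE {1..k} (\<lambda>_. {..<N}). word k (\<lambda>i. U ^^ n (\<alpha> i)) A x)"

end

theory Submission
  imports Defs
begin

locale hs =
  fixes sm :: "complex \<Rightarrow> 'a::ab_group_add \<Rightarrow> 'a" and ip :: "'a \<Rightarrow> 'a \<Rightarrow> complex"
  assumes H: "hilbert_space sm ip"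
begin

abbreviation nr where "nr \<equiv> hnorm ip"

lemmas HA = H[unfolded hilbert_space_def]
lemma sm_one[simp]: "sm 1 x = x" using conjunct1[OF HA] by blast
lemma sm_mult: "sm (a * b) x = sm a (sm b x)" using conjunct1[OF conjunct2[OF HA]] by blast
lemma sm_add_right: "sm a (x + y) = sm a x + sm a y" using conjunct1[OF conjunct2[OF conjunct2[OF HA]]] by blast
lemma sm_add_left: "sm (a + b) x = sm a x + sm b x" using conjunct1[OF conjunct2[OF conjunct2[OF conjunct2[OF HA]]]] by blast
lemma ip_add_left: "ip (x + y) z = ip x z + ip y z" using conjunct1[OF conjunct2[OF conjunct2[OF conjunct2[OF conjunct2[OF HA]]]]] by blast
lemma ip_sm_left[simp]: "ip (sm a x) y = a * ip x y" using conjunct1[OF conjunct2[OF conjunct2[OF conjunct2[OF conjunct2[OF conjunct2[OF HA]]]]]] by blast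
lemma ip_cnj: "ip y x = cnj (ip x y)" using conjunct1[OF conjunct2[OF conjunct2[OF conjunct2[OF conjunct2[OF conjunct2[OF conjunct2[OF HA]]]]]]] by blast
lemma ip_self: "Im (ip x x) = 0 \<and> Re (ip x x) \<ge> 0" using conjunct1[OF conjunct2[OF conjunct2[OF conjunct2[OF conjunct2[OF conjunct2[OF conjunct2[OF conjunct2[OF HA]]]]]]]] by blast
lemma ip_self_zero: "ip x x = 0 \<Longrightarrow> x = 0" using conjunct1[OF conjunct2[OF conjunct2[OF conjunct2[OF conjunct2[OF conjunct2[OF conjunct2[OF conjunct2[OF conjunct2[OF HA]]]]]]]]] by blast
lemma complete: "(\<forall>e>0. \<exists>M. \<forall>m\<ge>M. \<forall>n\<ge>M. nr (X m - X n) < e) \<Longrightarrow>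
        (\<exists>L. ((\<lambda>n. nr (X n - L)) \<longlongrightarrow> 0) sequentially)" by (rule mp[OF spec[OF conjunct2[OF conjunct2[OF conjunct2[OF conjunct2[OF conjunct2[OF conjunct2[OF conjunct2[OF conjunct2[OF conjunct2[OF HA]]]]]]]]], of X]])

lemma sm_zero_left[simp]: "sm 0 x = 0"
  using sm_add_left[of 0 0 x] by simp
lemma sm_zero_right[simp]: "sm a 0 = 0"
  using sm_add_right[of a 0 0] by simp
lemma sm_minus_right: "sm a (- x) = - sm a x"
  using minus_unique[of "sm a x" "sm a (-x)"] sm_add_right[of a x "-x"] by simp
lemma sm_diff_right: "sm a (x - y) = sm a x - sm a y"
  using sm_add_right[of a x "-y"] sm_minus_right[of a y] by simp
lemma sm_minus_left: "sm (- a) x = - sm a x"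
  using minus_unique[of "sm a x" "sm (-a) x"] sm_add_left[of a "-a" x] by simp
lemma sm_diff_left: "sm (a - b) x = sm a x - sm b x"
  using sm_add_left[of a "-b" x] by (simp add: sm_minus_left)
lemma sm_sum_right: "sm a (\<Sum>i\<in>I. f i) = (\<Sum>i\<in>I. sm a (f i))"
  by (induction I rule: infinite_finite_induct) (auto simp: sm_add_right)
lemma sm_sum_left: "sm (\<Sum>i\<in>I. f i) x = (\<Sum>i\<in>I. sm (f i) x)"
  by (induction I rule: infinite_finite_induct) (auto simp: sm_add_left)

lemma ip_zero_left[simp]: "ip 0 y = 0"
  using ip_add_left[of 0 0 y] by simp
lemma ip_minus_left: "ip (- x) y = - ip x y"
  using minus_unique[of "ip x y" "ip (-x) y"] ip_add_left[of x "-x" y] by simp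
lemma ip_diff_left: "ip (x - y) z = ip x z - ip y z"
  using ip_add_left[of x "-y" z] by (simp add: ip_minus_left)
lemma ip_sum_left: "ip (\<Sum>i\<in>I. f i) y = (\<Sum>i\<in>I. ip (f i) y)"
  by (induction I rule: infinite_finite_induct) (auto simp: ip_add_left)
lemma ip_add_right: "ip z (x + y) = ip z x + ip z y"
  by (metis ip_add_left ip_cnj complex_cnj_add)
lemma ip_zero_right[simp]: "ip y 0 = 0"
  by (metis ip_cnj ip_zero_left complex_cnj_zero)
lemma ip_sm_right[simp]: "ip x (sm a y) = cnj a * ip x y"
  by (metis ip_cnj ip_sm_left complex_cnj_mult)
lemma ip_minus_right: "ip y (- x) = - ip y x"
  by (metis ip_cnj ip_minus_left complex_cnj_minus)
lemma ip_diff_right: "ip z (x - y) = ip z x - ip z y"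
  by (metis ip_cnj ip_diff_left complex_cnj_diff)
lemma ip_sum_right: "ip y (\<Sum>i\<in>I. f i) = (\<Sum>i\<in>I. ip y (f i))"
  by (induction I rule: infinite_finite_induct) (auto simp: ip_add_right)

end

context hs
begin

lemma ip_self_real: "ip x x = of_real (Re (ip x x))"
  using ip_self[of x] by (simp add: complex_eq_iff)
lemma nr_ge0[simp]: "nr x \<ge> 0"
proof -
  have "0 \<le> Re (ip x x)" using ip_self by blast
  then show ?thesis by (simp add: hnorm_def)
qed
lemma nr_sq: "(nr x)^2 = Re (ip x x)"
proof -
  have "0 \<le> Re (ip x x)" using ip_self by blast
  then show ?thesis by (simp add: hnorm_def)
qed
lemma ip_self_nr: "ip x x = of_real ((nr x)^2)" using ip_self_real nr_sq by simp
lemma nr_zero_iff[simp]: "nr x = 0 \<longleftrightarrow> x = 0"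
proof
  assume "nr x = 0" then have "ip x x = 0" using ip_self_nr[of x] by simp
  then show "x = 0" by (rule ip_self_zero)
qed (simp add: hnorm_def)
lemma nr_zero[simp]: "nr 0 = 0" by simp
lemma nr_sm: "nr (sm a x) = cmod a * nr x"
proof -
  have "ip (sm a x) (sm a x) = (a * cnj a) * ip x x" by simp
  also have "\<dots> = of_real ((cmod a)^2 * (nr x)^2)"
    by (simp only: complex_mult_cnj ip_self_nr[of x] of_real_mult cmod_power2)
  finally have "(nr (sm a x))^2 = (cmod a * nr x)^2"
    by (simp add: nr_sq power_mult_distrib)
  then show ?thesis by (simp add: power2_eq_iff_nonneg)
qed
lemma nr_minus: "nr (- x) = nr x"
  using nr_sm[of "-1" x] by (simp add: sm_minus_left)
lemma nr_minus_commute: "nr (x - y) = nr (y - x)"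
  using nr_minus[of "x - y"] by simp

lemma cauchy_schwarz: "cmod (ip x y) \<le> nr x * nr y"
proof (cases "y = 0")
  case True then show ?thesis by simp
next
  case False
  define r where "r = (nr y)^2"
  define t where "t = ip x y / of_real r"
  have yy: "ip y y = of_real r" unfolding r_def by (rule ip_self_nr)
  have "nr y \<noteq> 0" using False by simp
  with nr_ge0[of y] have ny: "nr y > 0" by linarith
  have r0: "r > 0" unfolding r_def using False by simp
  have "0 \<le> Re (ip (x - sm t y) (x - sm t y))" using ip_self by blast
  also have "ip (x - sm t y) (x - sm t y) = ip x x - cnj t * ip x y - t * ip y x + t * cnj t * ip y y"
    by (simp add: ip_diff_left ip_diff_right algebra_simps)
  also have "t * cnj t * ip y y = t * cnj (ip x y)"
    using r0 False by (simp add: t_def yy)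
  also have "t * ip y x = t * cnj (ip x y)" by (simp add: ip_cnj[of y x])
  finally have 1: "0 \<le> Re (ip x x - cnj t * ip x y)" by simp
  have "cnj t * ip x y = (cnj (ip x y) * ip x y) / of_real r" by (simp add: t_def)
  also have "cnj (ip x y) * ip x y = of_real ((cmod (ip x y))^2)"
    by (metis complex_norm_square mult.commute)
  finally have "cnj t * ip x y = of_real ((cmod (ip x y))^2 / r)" by simp
  with 1 have "(cmod (ip x y))^2 / r \<le> (nr x)^2" by (simp add: nr_sq)
  then have "(cmod (ip x y))^2 \<le> (nr x)^2 * r" using r0 by (simp add: field_simps)
  then have "(cmod (ip x y))^2 \<le> (nr x * nr y)^2" by (simp add: r_def power_mult_distrib)
  then show ?thesis by (meson mult_nonneg_nonneg nr_ge0 power2_le_imp_le)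
qed

lemma nr_add_sq: "(nr (x + y))^2 = (nr x)^2 + 2 * Re (ip x y) + (nr y)^2"
proof -
  have "ip (x+y) (x+y) = ip x x + ip x y + cnj (ip x y) + ip y y"
    by (simp add: ip_add_left ip_add_right ip_cnj[of y x])
  then have "Re (ip (x+y) (x+y)) = Re (ip x x) + 2 * Re (ip x y) + Re (ip y y)" by simp
  then show ?thesis by (simp add: nr_sq)
qed

lemma nr_triangle: "nr (x + y) \<le> nr x + nr y"
proof -
  have "Re (ip x y) \<le> nr x * nr y" using cauchy_schwarz[of x y] complex_Re_le_cmod order_trans by blast
  then have "(nr (x + y))^2 \<le> (nr x)^2 + 2 * (nr x * nr y) + (nr y)^2" unfolding nr_add_sq by linarith
  also have "\<dots> = (nr x + nr y)^2" by (simp add: power2_sum)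
  finally show ?thesis by (meson add_nonneg_nonneg nr_ge0 power2_le_imp_le)
qed

lemma nr_diff_triangle: "nr (x - z) \<le> nr (x - y) + nr (y - z)"
  using nr_triangle[of "x - y" "y - z"] by simp
lemma nr_diff_le: "nr (x - y) \<le> nr x + nr y"
  using nr_triangle[of x "-y"] by (simp add: nr_minus)
lemma nr_rev_triangle: "nr x - nr y \<le> nr (x - y)"
  using nr_triangle[of "x - y" y] by simp
lemma nr_sum: "nr (\<Sum>i\<in>I. f i) \<le> (\<Sum>i\<in>I. nr (f i))"
proof (induction I rule: infinite_finite_induct)
  case (insert i I)
  then show ?case using nr_triangle[of "f i" "sum f I"] by simp
qed auto

lemma pythag: "ip x y = 0 \<Longrightarrow> (nr (x + y))^2 = (nr x)^2 + (nr y)^2"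
  by (simp add: nr_add_sq)

lemma ip_eq_zero_all: "(\<And>y. ip x y = 0) \<Longrightarrow> x = 0"
  using ip_self_zero by blast

end

lemma sandwich0: fixes f g :: "nat \<Rightarrow> real"
  assumes "\<And>n. 0 \<le> f n" "\<And>n. f n \<le> g n" "(g \<longlongrightarrow> 0) sequentially"
  shows "(f \<longlongrightarrow> 0) sequentially"
proof (rule tendsto_sandwich[of "\<lambda>_. 0" f sequentially g])
  show "\<forall>\<^sub>F n in sequentially. 0 \<le> f n" using assms(1) by (simp add: always_eventually)
  show "\<forall>\<^sub>F n in sequentially. f n \<le> g n" using assms(2) by (simp add: always_eventually)
qed (use assms(3) in auto)

context hs
begin

definition hlim :: "(nat \<Rightarrow> 'a) \<Rightarrow> 'a \<Rightarrow> bool" where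
  "hlim X L \<longleftrightarrow> ((\<lambda>n. nr (X n - L)) \<longlongrightarrow> 0) sequentially"

lemma hlim_iff: "hlim X L \<longleftrightarrow> (\<forall>e>0. \<exists>M. \<forall>n\<ge>M. nr (X n - L) < e)"
  unfolding hlim_def LIMSEQ_def dist_real_def by simp

lemma hlim_unique: assumes "hlim X L" "hlim X L'" shows "L = L'"
proof -
  have "nr (L - L') < e" if "e > 0" for e
  proof -
    obtain M1 where M1: "\<forall>n\<ge>M1. nr (X n - L) < e/2" using assms(1) \<open>e>0\<close> unfolding hlim_iff by (meson half_gt_zero)
    obtain M2 where M2: "\<forall>n\<ge>M2. nr (X n - L') < e/2" using assms(2) \<open>e>0\<close> unfolding hlim_iff by (meson half_gt_zero)
    have "nr (L - L') \<le> nr (L - X (max M1 M2)) + nr (X (max M1 M2) - L')" by (rule nr_diff_triangle)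
    also have "\<dots> < e/2 + e/2" using M1 M2 nr_minus_commute[of L] by (intro add_strict_mono) auto
    finally show ?thesis by simp
  qed
  then have "nr (L - L') = 0" using nr_ge0[of "L - L'"] by (metis less_le not_less)
  then show ?thesis by simp
qed

lemma hlim_cauchy: assumes "hlim X L" shows "\<forall>e>0. \<exists>M. \<forall>m\<ge>M. \<forall>n\<ge>M. nr (X m - X n) < e"
proof (intro allI impI)
  fix e :: real assume "e > 0"
  obtain M where M: "\<forall>n\<ge>M. nr (X n - L) < e/2" using assms \<open>e>0\<close> unfolding hlim_iff by (meson half_gt_zero)
  have "nr (X m - X n) < e" if "m \<ge> M" "n \<ge> M" for m n
  proof -
    have "nr (X m - X n) \<le> nr (X m - L) + nr (L - X n)" by (rule nr_diff_triangle)
    also have "\<dots> < e/2 + e/2" using M that nr_minus_commute[of L] by (intro add_strict_mono) auto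
    finally show ?thesis by simp
  qed
  then show "\<exists>M. \<forall>m\<ge>M. \<forall>n\<ge>M. nr (X m - X n) < e" by blast
qed

lemma cauchy_hlim: assumes "\<forall>e>0. \<exists>M. \<forall>m\<ge>M. \<forall>n\<ge>M. nr (X m - X n) < e" shows "\<exists>L. hlim X L"
  using complete[OF assms] unfolding hlim_def by blast

lemma hlim_const: "hlim (\<lambda>n. x) x" unfolding hlim_def by simp

lemma hlim_add: assumes "hlim X L" "hlim Y M" shows "hlim (\<lambda>n. X n + Y n) (L + M)"
proof -
  have t: "((\<lambda>n. nr (X n - L) + nr (Y n - M)) \<longlongrightarrow> 0) sequentially"
    using tendsto_add[OF assms[unfolded hlim_def]] by simp
  have le: "nr (X n + Y n - (L + M)) \<le> nr (X n - L) + nr (Y n - M)" for n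
  proof -
    have "X n + Y n - (L + M) = (X n - L) + (Y n - M)" by (simp add: algebra_simps)
    then show ?thesis using nr_triangle[of "X n - L" "Y n - M"] by metis
  qed
  show ?thesis unfolding hlim_def by (rule sandwich0[OF nr_ge0 le t])
qed

lemma hlim_le_bound:
  assumes "\<And>n. nr (X n - L) \<le> b n" "(b \<longlongrightarrow> 0) sequentially" shows "hlim X L"
  unfolding hlim_def by (rule sandwich0[OF nr_ge0 assms])

lemma hlim_sm_scalar: assumes "(f \<longlongrightarrow> c) sequentially" shows "hlim (\<lambda>n. sm (f n) v) (sm c v)"
proof (rule hlim_le_bound)
  show "nr (sm (f n) v - sm c v) \<le> cmod (f n - c) * nr v" for n
    by (simp add: sm_diff_left[symmetric] nr_sm)
  have "((\<lambda>n. cmod (f n - c) * nr v) \<longlongrightarrow> cmod (c - c) * nr v) sequentially"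
    by (intro tendsto_intros assms)
  then show "((\<lambda>n. cmod (f n - c) * nr v) \<longlongrightarrow> 0) sequentially" by simp
qed

lemma hlim_sm: assumes "hlim X L" shows "hlim (\<lambda>n. sm a (X n)) (sm a L)"
proof (rule hlim_le_bound)
  show "nr (sm a (X n) - sm a L) \<le> cmod a * nr (X n - L)" for n
    by (simp add: sm_diff_right[symmetric] nr_sm)
  show "((\<lambda>n. cmod a * nr (X n - L)) \<longlongrightarrow> 0) sequentially"
    using tendsto_mult_left[OF assms[unfolded hlim_def], of "cmod a"] by simp
qed

lemma hlim_sum: assumes "\<And>i. i \<in> I \<Longrightarrow> hlim (X i) (L i)"
  shows "hlim (\<lambda>n. \<Sum>i\<in>I. X i n) (\<Sum>i\<in>I. L i)"
  using assms
proof (induction I rule: infinite_finite_induct)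
  case (infinite I) then show ?case by (simp add: hlim_const)
next
  case empty then show ?case by (simp add: hlim_const)
next
  case (insert i I)
  then show ?case by (simp add: hlim_add)
qed

lemma hlim_ip: assumes "hlim X L" shows "((\<lambda>n. ip (X n) y) \<longlongrightarrow> ip L y) sequentially"
proof -
  have t: "((\<lambda>n. nr (X n - L) * nr y) \<longlongrightarrow> 0) sequentially"
    using tendsto_mult_right[OF assms[unfolded hlim_def], of "nr y"] by simp
  have le: "cmod (ip (X n) y - ip L y) \<le> nr (X n - L) * nr y" for n
    using cauchy_schwarz[of "X n - L" y] by (simp add: ip_diff_left)
  have "((\<lambda>n. cmod (ip (X n) y - ip L y)) \<longlongrightarrow> 0) sequentially"
    by (rule sandwich0[OF norm_ge_zero le t])
  then show ?thesis using tendsto_norm_zero_iff LIM_zero_cancel by blast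
qed

lemma nr_le_eps: assumes "\<And>e. e > 0 \<Longrightarrow> nr x \<le> b + e" shows "nr x \<le> b"
  using assms by (meson field_le_epsilon)

lemma hlim_nr_le: assumes "hlim X L" "\<And>n. n \<ge> M \<Longrightarrow> nr (X n - y) \<le> b" shows "nr (L - y) \<le> b"
proof (rule nr_le_eps)
  fix e :: real assume "e > 0"
  then obtain M1 where M1: "\<forall>n\<ge>M1. nr (X n - L) < e" using assms(1) unfolding hlim_iff by blast
  have a: "nr (L - X (max M M1)) \<le> e" using M1[rule_format, of "max M M1"] nr_minus_commute[of L] by simp
  have "nr (L - y) \<le> nr (L - X (max M M1)) + nr (X (max M M1) - y)" by (rule nr_diff_triangle)
  also have "\<dots> \<le> e + b" using a assms(2)[of "max M M1"] by (intro add_mono) auto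
  finally show "nr (L - y) \<le> b + e" by simp
qed

end

locale ap = hs +
  fixes U :: "'a \<Rightarrow> 'a"
  assumes unitary: "unitary_op sm ip U"
    and almost_per: "almost_periodic sm ip U"
begin

lemma U_add: "U (x + y) = U x + U y" using unitary unfolding unitary_op_def bounded_op_def by blast
lemma U_sm: "U (sm a x) = sm a (U x)" using unitary unfolding unitary_op_def bounded_op_def by blast
lemma U_ip: "ip (U x) (U y) = ip x y" using unitary unfolding unitary_op_def by blast
lemma U_surj: "surj U" using unitary unfolding unitary_op_def by blast

definition Upw :: "nat \<Rightarrow> 'a \<Rightarrow> 'a" where "Upw n = U ^^ n"

lemma Upw_0[simp]: "Upw 0 x = x" by (simp add: Upw_def)
lemma Upw_Suc: "Upw (Suc n) x = U (Upw n x)" by (simp add: Upw_def)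
lemma Upw_add: "Upw n (x + y) = Upw n x + Upw n y" by (induction n) (auto simp: Upw_Suc U_add)
lemma Upw_sm: "Upw n (sm a x) = sm a (Upw n x)" by (induction n) (auto simp: Upw_Suc U_sm)
lemma Upw_ip: "ip (Upw n x) (Upw n y) = ip x y" by (induction n) (auto simp: Upw_Suc U_ip)
lemma Upw_nr[simp]: "nr (Upw n x) = nr x" by (simp add: hnorm_def Upw_ip)
lemma Upw_zero[simp]: "Upw n 0 = 0" using Upw_sm[of n 0 0] by simp
lemma Upw_minus: "Upw n (- x) = - Upw n x" using Upw_sm[of n "-1" x] by (simp add: sm_minus_left)
lemma Upw_diff: "Upw n (x - y) = Upw n x - Upw n y" using Upw_add[of n x "-y"] by (simp add: Upw_minus)
lemma Upw_sum: "Upw n (\<Sum>i\<in>I. f i) = (\<Sum>i\<in>I. Upw n (f i))"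
  by (induction I rule: infinite_finite_induct) (auto simp: Upw_add)
lemma U_eq_Un1: "U x = Upw 1 x" by (simp add: Upw_Suc)
lemma U_zero[simp]: "U 0 = 0" using U_sm[of 0 0] by simp
lemma U_diff: "U (x - y) = U x - U y" using Upw_diff[of 1] by (simp add: Upw_Suc)
lemma U_nr[simp]: "nr (U x) = nr x" using Upw_nr[of 1] by (simp add: Upw_Suc)
lemma Upw_plus: "Upw (m + n) x = Upw m (Upw n x)" by (induction m) (auto simp: Upw_Suc)

lemma Upw_eig: "U v = sm z v \<Longrightarrow> Upw n v = sm (z ^ n) v"
  by (induction n) (auto simp: Upw_Suc U_sm sm_mult[symmetric] mult.commute)

lemma eig_unit: assumes "U v = sm z v" "v \<noteq> 0" shows "cmod z = 1"
proof -
  have "ip v v = cnj z * z * ip v v" using U_ip[of v v] assms(1) by (simp add: mult.assoc)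
  moreover have "ip v v \<noteq> 0" using assms(2) ip_self_zero by blast
  ultimately have "cnj z * z = 1" by simp
  then have "z * cnj z = 1" by (simp add: mult.commute)
  then have "(cmod z)^2 = 1" by (metis complex_norm_square of_real_eq_1_iff)
  then show ?thesis using norm_ge_zero[of z] by (auto simp add: power2_eq_1_iff)
qed

lemma sigma_unit: "z \<in> sigma_pp sm U \<Longrightarrow> cmod z = 1"
  unfolding sigma_pp_def using eig_unit by blast

lemma unit_cnj_inv: "cmod z = 1 \<Longrightarrow> cnj z * z = 1"
  by (metis complex_norm_square mult.commute of_real_1 power_one)

lemma eig_orth: assumes "U v = sm z v" "U u = sm w u" "z \<noteq> w" shows "ip v u = 0"
proof (cases "u = 0")
  case True then show ?thesis by simp
next
  case False
  then have w1: "cnj w * w = 1" using eig_unit[OF assms(2)] unit_cnj_inv by blast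
  have "ip v u = cnj w * z * ip v u" using U_ip[of v u] assms(1,2) by (simp add: mult.assoc)
  then have "(cnj w * z - 1) * ip v u = 0" by (simp add: algebra_simps)
  moreover have "cnj w * z \<noteq> 1"
  proof
    assume "cnj w * z = 1"
    then have "z * (cnj w * w) = w" by (simp add: ac_simps)
    then show False using w1 assms(3) by (simp add: mult.assoc)
  qed
  ultimately show ?thesis by simp
qed

end

lemma geom_avg:
  fixes d :: complex assumes "cmod d \<le> 1"
  shows "((\<lambda>N. (1 / of_nat N) * (\<Sum>n<N. d^n)) \<longlongrightarrow> (if d = 1 then 1 else 0)) sequentially"
proof (cases "d = 1")
  case True
  have "((\<lambda>N. (1 / of_nat N) * (\<Sum>n<N. d^n)) \<longlongrightarrow> 1) sequentially"
  proof (rule tendsto_eventually)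
    show "\<forall>\<^sub>F N in sequentially. 1 / of_nat N * (\<Sum>n<N. d ^ n) = (1::complex)"
      using eventually_ge_at_top[of "1::nat"] by eventually_elim (simp add: True)
  qed
  then show ?thesis using True by simp
next
  case False
  define c where "c = 2 / cmod (1 - d)"
  have le: "cmod ((1 / of_nat N) * (\<Sum>n<N. d^n)) \<le> c * (1 / real N)" for N
  proof -
    have "cmod (\<Sum>n<N. d^n) = cmod (1 - d^N) / cmod (1 - d)"
      using False by (simp add: sum_gp_strict norm_divide)
    also have "cmod (1 - d^N) \<le> 2"
    proof -
      have "cmod (1 - d^N) \<le> cmod 1 + cmod (d^N)" by (rule norm_triangle_ineq4)
      also have "cmod (d^N) \<le> 1" using assms by (simp add: norm_power power_le_one)
      finally show ?thesis by simp
    qed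
    then have "cmod (1 - d^N) / cmod (1 - d) \<le> c" unfolding c_def
      by (intro divide_right_mono) auto
    finally have "cmod (\<Sum>n<N. d^n) \<le> c" by simp
    then show ?thesis by (simp add: norm_mult norm_divide divide_simps mult.commute)
  qed
  have "((\<lambda>N. c * (1 / real N)) \<longlongrightarrow> c * 0) sequentially"
    by (intro tendsto_mult tendsto_const lim_const_over_n)
  then have "((\<lambda>N. cmod ((1 / of_nat N) * (\<Sum>n<N. d^n))) \<longlongrightarrow> 0) sequentially"
    by (intro sandwich0[OF norm_ge_zero le]) simp
  then show ?thesis using False tendsto_norm_zero_iff by auto
qed

context ap
begin

lemma lin_zero: fixes T :: "'a \<Rightarrow> 'a" assumes "\<And>a x. T (sm a x) = sm a (T x)" shows "T 0 = 0"
  using assms[of 0 0] by simp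

lemma lin_sum: fixes T :: "'a \<Rightarrow> 'a" assumes "\<And>x y. T (x + y) = T x + T y" "\<And>a x. T (sm a x) = sm a (T x)"
  shows "T (\<Sum>i\<in>I. f i) = (\<Sum>i\<in>I. T (f i))"
  by (induction I rule: infinite_finite_induct) (auto simp: assms lin_zero[OF assms(2)])

lemma lin_diff: fixes T :: "'a \<Rightarrow> 'a" assumes "\<And>x y. T (x + y) = T x + T y" shows "T (x - y) = T x - T y"
  using assms[of "x - y" y] by (simp add: algebra_simps)

lemma hspan_sum: assumes "y \<in> hspan sm S"
  obtains I :: "nat set" and c v where "finite I" "\<And>i. i \<in> I \<Longrightarrow> v i \<in> S" "y = (\<Sum>i\<in>I. sm (c i) (v i))"
proof -
  from assms obtain I :: "nat set" and c v where "finite I" "\<forall>i\<in>I. v i \<in> S" "y = (\<Sum>i\<in>I. sm (c i) (v i))"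
    unfolding hspan_def mem_Collect_eq by (elim exE conjE) fast
  then show thesis using that by blast
qed

lemma extend_conv:
  assumes add: "\<And>N x y. T N (x + y) = T N x + T N y"
    and smul: "\<And>N a x. T N (sm a x) = sm a (T N x)"
    and bd: "\<And>N x. nr (T N x) \<le> C * nr x" and C: "C \<ge> 0"
    and eig: "\<And>v z. U v = sm z v \<Longrightarrow> \<exists>L. hlim (\<lambda>N. T N v) L"
  shows "\<exists>L. hlim (\<lambda>N. T N x) L"
proof -
  have span: "\<exists>L. hlim (\<lambda>N. T N y) L" if yin: "y \<in> hspan sm {v. \<exists>z. U v = sm z v}" for y
  proof -
    obtain I :: "nat set" and c v where I: "finite I" "\<And>i. i \<in> I \<Longrightarrow> v i \<in> {v. \<exists>z. U v = sm z v}"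
      "y = (\<Sum>i\<in>I. sm (c i) (v i))" by (metis hspan_sum[OF yin])
    have "\<forall>i\<in>I. \<exists>L. hlim (\<lambda>N. T N (v i)) L" using I(2) eig by blast
    then obtain L where L: "\<And>i. i \<in> I \<Longrightarrow> hlim (\<lambda>N. T N (v i)) (L i)" by metis
    have "T N y = (\<Sum>i\<in>I. sm (c i) (T N (v i)))" for N
      unfolding I(3) by (simp add: lin_sum[of "T N", OF add smul] smul)
    moreover have "hlim (\<lambda>N. \<Sum>i\<in>I. sm (c i) (T N (v i))) (\<Sum>i\<in>I. sm (c i) (L i))"
      by (intro hlim_sum hlim_sm L)
    ultimately show ?thesis by auto
  qed
  have "\<forall>e>0. \<exists>M. \<forall>m\<ge>M. \<forall>n\<ge>M. nr (T m x - T n x) < e"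
  proof (intro allI impI)
    fix e :: real assume e: "e > 0"
    define d where "d = e / (3 * (C + 1))"
    have d: "d > 0" using e C by (simp add: d_def)
    obtain y where y: "y \<in> hspan sm {v. \<exists>z. U v = sm z v}" "nr (x - y) < d"
      using almost_per d unfolding almost_periodic_def by blast
    obtain L where "hlim (\<lambda>N. T N y) L" using span[OF y(1)] by blast
    then obtain M where M: "\<forall>m\<ge>M. \<forall>n\<ge>M. nr (T m y - T n y) < e/3"
      using hlim_cauchy e by (meson divide_pos_pos zero_less_numeral)
    have "nr (T m x - T n x) < e" if "m \<ge> M" "n \<ge> M" for m n
    proof -
      have Cd: "C * d \<le> e / 3" using C e unfolding d_def by (simp add: field_simps)
      have "T m x - T n x = T m (x - y) + (T m y - T n y) - T n (x - y)"
        by (simp add: lin_diff[of "T m", OF add] lin_diff[of "T n", OF add])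
      then have "nr (T m x - T n x) \<le> nr (T m (x - y) + (T m y - T n y)) + nr (T n (x - y))"
        using nr_diff_le by simp
      also have "\<dots> \<le> nr (T m (x - y)) + nr (T m y - T n y) + nr (T n (x - y))"
        using nr_triangle by simp
      also have "\<dots> < C * d + e/3 + C * d"
      proof -
        have "nr (T m (x - y)) \<le> C * d" using bd[of m "x - y"] y(2) C
          by (meson less_imp_le mult_left_mono order_trans)
        moreover have "nr (T n (x - y)) \<le> C * d" using bd[of n "x - y"] y(2) C
          by (meson less_imp_le mult_left_mono order_trans)
        ultimately show ?thesis using M that by fastforce
      qed
      also have "\<dots> \<le> e" using Cd by simp
      finally show ?thesis .
    qed
    then show "\<exists>M. \<forall>m\<ge>M. \<forall>n\<ge>M. nr (T m x - T n x) < e" by blast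
  qed
  then show ?thesis by (rule cauchy_hlim)
qed

end

context ap
begin

lemma sm_comm: "sm a (sm b x) = sm b (sm a x)"
  by (metis sm_mult mult.commute)

definition erg :: "complex \<Rightarrow> nat \<Rightarrow> 'a \<Rightarrow> 'a" where
  "erg z N x = sm (1 / of_nat N) (\<Sum>n<N. sm (cnj z ^ n) (Upw n x))"

lemma erg_add: "erg z N (x + y) = erg z N x + erg z N y"
  by (simp add: erg_def Upw_add sm_add_right sum.distrib)

lemma erg_sm: "erg z N (sm a x) = sm a (erg z N x)"
  by (simp add: erg_def Upw_sm sm_sum_right sm_comm[of _ a])

lemma erg_bd: assumes "cmod z = 1" shows "nr (erg z N x) \<le> nr x"
proof (cases "N = 0")
  case True then show ?thesis by (simp add: erg_def)
next
  case False
  have "nr (erg z N x) = (1 / real N) * nr (\<Sum>n<N. sm (cnj z ^ n) (Upw n x))"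
    by (simp add: erg_def nr_sm norm_divide)
  also have "nr (\<Sum>n<N. sm (cnj z ^ n) (Upw n x)) \<le> (\<Sum>n<N. nr (sm (cnj z ^ n) (Upw n x)))"
    by (rule nr_sum)
  also have "\<dots> = real N * nr x" using assms by (simp add: nr_sm norm_power)
  finally show ?thesis using False by (simp add: divide_simps)
qed

lemma erg_eig: assumes "U v = sm w v"
  shows "erg z N v = sm ((1 / of_nat N) * (\<Sum>n<N. (cnj z * w)^n)) v"
proof -
  have "(\<Sum>n<N. sm (cnj z ^ n) (Upw n v)) = (\<Sum>n<N. sm ((cnj z * w)^n) v)"
    using Upw_eig[OF assms] by (simp add: sm_mult[symmetric] power_mult_distrib)
  also have "\<dots> = sm (\<Sum>n<N. (cnj z * w)^n) v" by (simp add: sm_sum_left)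
  finally show ?thesis by (simp add: erg_def sm_mult[symmetric])
qed

lemma erg_conv: assumes z: "cmod z = 1" shows "\<exists>L. hlim (\<lambda>N. erg z N x) L"
proof (rule extend_conv[of "erg z" 1])
  fix v w assume vw: "U v = sm w v"
  show "\<exists>L. hlim (\<lambda>N. erg z N v) L"
  proof (cases "v = 0")
    case True
    then have "erg z N v = 0" for N using erg_sm[of z N 0 0] by simp
    then show ?thesis using True hlim_const by auto
  next
    case False
    then have "cmod w = 1" using eig_unit vw by blast
    then have "cmod (cnj z * w) \<le> 1" using z by (simp add: norm_mult)
    from geom_avg[OF this] have "hlim (\<lambda>N. sm ((1 / of_nat N) * (\<Sum>n<N. (cnj z * w)^n)) v)
        (sm (if cnj z * w = 1 then 1 else 0) v)" by (rule hlim_sm_scalar)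
    then show ?thesis using erg_eig[OF vw] by auto
  qed
qed (auto simp: erg_add erg_sm erg_bd[OF z])

lemma eigsp_diff: "a \<in> eigenspace sm U z \<Longrightarrow> b \<in> eigenspace sm U z \<Longrightarrow> a - b \<in> eigenspace sm U z"
  by (simp add: eigenspace_def U_diff sm_diff_right)

lemma E_exists: "\<exists>y. y \<in> eigenspace sm U z \<and> (\<forall>m\<in>eigenspace sm U z. ip (x - y) m = 0)"
proof (cases "z \<in> sigma_pp sm U")
  case False
  then have "eigenspace sm U z = {0}" unfolding sigma_pp_def eigenspace_def by auto
  then show ?thesis by auto
next
  case True
  then have z: "cmod z = 1" by (rule sigma_unit)
  have zz: "z * cnj z = 1" using unit_cnj_inv[OF z] by (simp add: mult.commute)
  obtain y where y: "hlim (\<lambda>N. erg z N x) y" using erg_conv[OF z] by blast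
  define a where "a n = sm (cnj z ^ n) (Upw n x)" for n
  have Ua: "U (a n) = sm z (a (Suc n))" for n
  proof -
    have "sm z (a (Suc n)) = sm (z * cnj z * cnj z ^ n) (Upw (Suc n) x)"
      by (simp add: a_def sm_mult[symmetric] mult.assoc)
    also have "\<dots> = U (a n)" by (simp add: zz a_def U_sm Upw_Suc)
    finally show ?thesis by simp
  qed
  have key: "U (erg z N x) - sm z (erg z N x) = sm (1 / of_nat N) (sm z (a N - a 0))" for N
  proof -
    have "U (\<Sum>n<N. a n) = sm z (\<Sum>n<N. a (Suc n))"
      by (simp add: lin_sum[of U, OF U_add U_sm] Ua sm_sum_right)
    then have "U (\<Sum>n<N. a n) - sm z (\<Sum>n<N. a n) = sm z ((\<Sum>n<N. a (Suc n)) - (\<Sum>n<N. a n))"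
      by (simp add: sm_diff_right)
    also have "(\<Sum>n<N. a (Suc n)) - (\<Sum>n<N. a n) = a N - a 0"
      by (induction N) (simp_all add: algebra_simps)
    finally have "U (\<Sum>n<N. a n) - sm z (\<Sum>n<N. a n) = sm z (a N - a 0)" .
    then show ?thesis unfolding erg_def a_def[symmetric]
      by (simp add: U_sm sm_diff_right[symmetric] sm_comm[of z])
  qed
  have "hlim (\<lambda>N. U (erg z N x)) (U y)"
    using y unfolding hlim_def by (simp add: U_diff[symmetric])
  moreover have "hlim (\<lambda>N. U (erg z N x)) (sm z y)"
  proof (rule hlim_le_bound)
    show "nr (U (erg z N x) - sm z y) \<le> (1 / real N) * (2 * nr x) + nr (erg z N x - y)" for N
    proof -
      have "nr (U (erg z N x) - sm z y) \<le> nr (U (erg z N x) - sm z (erg z N x)) + nr (sm z (erg z N x) - sm z y)"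
        by (rule nr_diff_triangle)
      also have "nr (sm z (erg z N x) - sm z y) = nr (erg z N x - y)"
        using z by (simp add: sm_diff_right[symmetric] nr_sm)
      also have "nr (U (erg z N x) - sm z (erg z N x)) = (1 / real N) * nr (a N - a 0)"
        using z by (simp add: key nr_sm norm_divide)
      finally have 1: "nr (U (erg z N x) - sm z y) \<le> (1 / real N) * nr (a N - a 0) + nr (erg z N x - y)" .
      have "nr (a N - a 0) \<le> 2 * nr x"
        using nr_diff_le[of "a N" "a 0"] z by (simp add: a_def nr_sm norm_power)
      then have "(1 / real N) * nr (a N - a 0) \<le> (1 / real N) * (2 * nr x)"
        by (intro mult_left_mono) auto
      then show ?thesis using 1 by linarith
    qed
    have "((\<lambda>N. (1 / real N) * (2 * nr x) + nr (erg z N x - y)) \<longlongrightarrow> 0 * (2 * nr x) + 0) sequentially"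
      using y unfolding hlim_def by (intro tendsto_intros lim_const_over_n)
    then show "((\<lambda>N. (1 / real N) * (2 * nr x) + nr (erg z N x - y)) \<longlongrightarrow> 0) sequentially" by simp
  qed
  ultimately have yM: "U y = sm z y" by (rule hlim_unique)
  have "ip (x - y) m = 0" if m: "U m = sm z m" for m
  proof -
    have ipn: "ip (Upw n x) m = z ^ n * ip x m" for n
    proof -
      have "ip x m = ip (Upw n x) (Upw n m)" by (simp add: Upw_ip)
      also have "\<dots> = cnj (z ^ n) * ip (Upw n x) m" using Upw_eig[OF m] by simp
      finally have "z ^ n * ip x m = (z * cnj z) ^ n * ip (Upw n x) m"
        by (simp add: power_mult_distrib)
      then show ?thesis using zz by simp
    qed
    have "ip (erg z N x) m = ip x m" if "N \<ge> 1" for N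
    proof -
      have "ip (erg z N x) m = (1 / of_nat N) * (\<Sum>n<N. cnj z ^ n * (z ^ n * ip x m))"
        by (simp add: erg_def ip_sum_left ipn)
      also have "\<dots> = (1 / of_nat N) * (\<Sum>n<N. ip x m)"
        by (simp add: mult.assoc[symmetric] power_mult_distrib[symmetric] unit_cnj_inv[OF z])
      also have "\<dots> = ip x m" using that by simp
      finally show ?thesis .
    qed
    then have "((\<lambda>N. ip (erg z N x) m) \<longlongrightarrow> ip x m) sequentially"
      by (intro tendsto_eventually eventually_sequentiallyI[of 1]) auto
    moreover have "((\<lambda>N. ip (erg z N x) m) \<longlongrightarrow> ip y m) sequentially" by (rule hlim_ip[OF y])
    ultimately have "ip y m = ip x m" using LIMSEQ_unique by blast
    then show ?thesis by (simp add: ip_diff_left)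
  qed
  then show ?thesis using yM unfolding eigenspace_def by blast
qed

end

context ap
begin

abbreviation Ep where "Ep z \<equiv> Eproj sm ip U z"

lemma E_char:
  assumes "y \<in> eigenspace sm U z" "\<forall>m\<in>eigenspace sm U z. ip (x - y) m = 0"
  shows "Ep z x = y"
  unfolding Eproj_def orth_proj_def
proof (rule the_equality)
  show "y \<in> eigenspace sm U z \<and> (\<forall>m\<in>eigenspace sm U z. ip (x - y) m = 0)" using assms by blast
next
  fix y' assume y': "y' \<in> eigenspace sm U z \<and> (\<forall>m\<in>eigenspace sm U z. ip (x - y') m = 0)"
  define d where "d = y' - y"
  have d: "d \<in> eigenspace sm U z" unfolding d_def using y' assms(1) by (intro eigsp_diff) auto
  have "ip (x - y) d = 0" "ip (x - y') d = 0" using assms(2) y' d by auto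
  then have "ip ((x - y) - (x - y')) d = 0" by (simp add: ip_diff_left)
  then have "ip d d = 0" by (simp add: d_def)
  then have "d = 0" by (rule ip_self_zero)
  then show "y' = y" using d_def by simp
qed

lemma E_prop: "Ep z x \<in> eigenspace sm U z \<and> (\<forall>m\<in>eigenspace sm U z. ip (x - Ep z x) m = 0)"
proof -
  obtain y where "y \<in> eigenspace sm U z" "\<forall>m\<in>eigenspace sm U z. ip (x - y) m = 0"
    using E_exists by blast
  moreover then have "Ep z x = y" by (rule E_char)
  ultimately show ?thesis by simp
qed

lemma E_U: "U (Ep z x) = sm z (Ep z x)"
  using E_prop[of z x] unfolding eigenspace_def by blast

lemma E_orth: "U m = sm z m \<Longrightarrow> ip (x - Ep z x) m = 0"
  using E_prop[of z x] unfolding eigenspace_def by blast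

lemma E_add: "Ep z (x + y) = Ep z x + Ep z y"
proof (rule E_char)
  show "Ep z x + Ep z y \<in> eigenspace sm U z"
    unfolding eigenspace_def by (simp add: U_add E_U sm_add_right)
  show "\<forall>m\<in>eigenspace sm U z. ip (x + y - (Ep z x + Ep z y)) m = 0"
  proof
    fix m assume "m \<in> eigenspace sm U z"
    then have "U m = sm z m" unfolding eigenspace_def by simp
    then have "ip (x - Ep z x) m = 0" "ip (y - Ep z y) m = 0" using E_orth by auto
    moreover have eq: "x + y - (Ep z x + Ep z y) = (x - Ep z x) + (y - Ep z y)" by (simp add: algebra_simps)
    ultimately show "ip (x + y - (Ep z x + Ep z y)) m = 0" unfolding eq by (simp add: ip_add_left)
  qed
qed

lemma E_sm: "Ep z (sm a x) = sm a (Ep z x)"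
proof (rule E_char)
  show "sm a (Ep z x) \<in> eigenspace sm U z"
    unfolding eigenspace_def by (simp add: U_sm E_U sm_comm[of a])
  show "\<forall>m\<in>eigenspace sm U z. ip (sm a x - sm a (Ep z x)) m = 0"
  proof
    fix m assume "m \<in> eigenspace sm U z"
    then have "U m = sm z m" unfolding eigenspace_def by simp
    then have "ip (x - Ep z x) m = 0" using E_orth by auto
    then show "ip (sm a x - sm a (Ep z x)) m = 0" by (simp add: sm_diff_right[symmetric])
  qed
qed

lemma E_zero[simp]: "Ep z 0 = 0" using E_sm[of z 0 0] by simp
lemma E_diff: "Ep z (x - y) = Ep z x - Ep z y" by (rule lin_diff, rule E_add)
lemma E_sum: "Ep z (\<Sum>i\<in>I. f i) = (\<Sum>i\<in>I. Ep z (f i))" by (rule lin_sum, rule E_add, rule E_sm)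

lemma E_self: "U v = sm z v \<Longrightarrow> Ep z v = v"
  by (rule E_char) (auto simp: eigenspace_def)

lemma E_other: assumes "U v = sm w v" "w \<noteq> z" shows "Ep z v = 0"
proof (rule E_char)
  show "0 \<in> eigenspace sm U z" by (simp add: eigenspace_def)
  show "\<forall>m\<in>eigenspace sm U z. ip (v - 0) m = 0"
    using eig_orth[OF assms(1) _ assms(2)] unfolding eigenspace_def by simp
qed

lemma E_E: "Ep w (Ep z x) = (if w = z then Ep z x else 0)"
  using E_self[OF E_U] E_other[OF E_U] by auto

lemma E_ip_orth: "z \<noteq> w \<Longrightarrow> ip (Ep z x) (Ep w y) = 0"
  using eig_orth[OF E_U E_U] by blast

lemma E_perp: "ip (Ep z x) (x - Ep z x) = 0"
  using E_orth[of "Ep z x" z x] E_U[of z x] by (metis ip_cnj complex_cnj_zero)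

lemma perp_nr: assumes "ip a (x - a) = 0" shows "nr a \<le> nr x" "nr (x - a) \<le> nr x"
proof -
  have "(nr x)^2 = (nr a)^2 + (nr (x - a))^2" using pythag[OF assms] by simp
  then have "(nr a)^2 \<le> (nr x)^2" "(nr (x - a))^2 \<le> (nr x)^2" by simp_all
  then show "nr a \<le> nr x" "nr (x - a) \<le> nr x" by (simp_all add: power2_le_iff_abs_le abs_of_nonneg)
qed

lemma E_nr: "nr (Ep z x) \<le> nr x" using perp_nr(1)[OF E_perp] .

lemma Upw_E: "Upw n (Ep z x) = sm (z^n) (Ep z x)" using Upw_eig[OF E_U] .

lemma E_nonev: assumes "z \<notin> sigma_pp sm U" shows "Ep z x = 0"
  using E_U[of z x] assms unfolding sigma_pp_def by blast

definition Pq :: "complex set \<Rightarrow> 'a \<Rightarrow> 'a" where "Pq Q x = (\<Sum>z\<in>Q. Ep z x)"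

lemma Pq_add: "Pq Q (x + y) = Pq Q x + Pq Q y" by (simp add: Pq_def E_add sum.distrib)
lemma Pq_sm: "Pq Q (sm a x) = sm a (Pq Q x)" by (simp add: Pq_def E_sm sm_sum_right)
lemma Pq_diff: "Pq Q (x - y) = Pq Q x - Pq Q y" by (rule lin_diff, rule Pq_add)
lemma Pq_sum: "Pq Q (\<Sum>i\<in>I. f i) = (\<Sum>i\<in>I. Pq Q (f i))" by (rule lin_sum, rule Pq_add, rule Pq_sm)
lemma Pq_zero[simp]: "Pq Q 0 = 0" by (simp add: Pq_def)

lemma Pq_ip_eig: assumes "finite Q" "w \<in> Q" "U m = sm w m" shows "ip (Pq Q x) m = ip x m"
proof -
  have "ip (Pq Q x) m = (\<Sum>z\<in>Q. ip (Ep z x) m)" by (simp add: Pq_def ip_sum_left)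
  also have "\<dots> = (\<Sum>z\<in>Q. if z = w then ip x m else 0)"
  proof (rule sum.cong)
    fix z assume "z \<in> Q"
    show "ip (Ep z x) m = (if z = w then ip x m else 0)"
    proof (cases "z = w")
      case True
      then show ?thesis using E_orth[OF assms(3), of x] by (simp add: ip_diff_left)
    next
      case False
      then show ?thesis using eig_orth[OF E_U assms(3)] by simp
    qed
  qed simp
  also have "\<dots> = ip x m" using assms(1,2) by simp
  finally show ?thesis .
qed

lemma Pq_perp: assumes "finite Q" shows "ip (Pq Q x) (x - Pq Q x) = 0"
proof -
  have "ip (Pq Q x) (x - Pq Q x) = (\<Sum>z\<in>Q. ip (Ep z x) (x - Pq Q x))" by (simp add: Pq_def ip_sum_left)
  also have "\<dots> = (\<Sum>z\<in>Q. cnj (ip (x - Pq Q x) (Ep z x)))" by (simp add: ip_cnj[of "Ep _ x"])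
  also have "\<dots> = 0"
  proof (rule sum.neutral, rule ballI)
    fix z assume "z \<in> Q"
    then have "ip (Pq Q x) (Ep z x) = ip x (Ep z x)" using Pq_ip_eig[OF assms _ E_U] by blast
    then show "cnj (ip (x - Pq Q x) (Ep z x)) = 0" by (simp add: ip_diff_left)
  qed
  finally show ?thesis .
qed

lemma Pq_nr: "finite Q \<Longrightarrow> nr (Pq Q x) \<le> nr x" using perp_nr(1)[OF Pq_perp] .
lemma IPq_nr: "finite Q \<Longrightarrow> nr (x - Pq Q x) \<le> nr x" using perp_nr(2)[OF Pq_perp] .

lemma Pq_eig: assumes "finite Q" "U v = sm w v" "w \<in> Q" shows "Pq Q v = v"
proof -
  have "Pq Q v = (\<Sum>z\<in>Q. if z = w then v else 0)"
    unfolding Pq_def using E_self[OF assms(2)] E_other[OF assms(2)] by (intro sum.cong) auto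
  then show ?thesis using assms by simp
qed

lemma Pq_E: assumes "finite Q" "z \<in> Q" shows "Pq Q (Ep z x) = Ep z x"
  using Pq_eig[OF assms(1) E_U assms(2)] .

lemma Pq_Pq: assumes "finite Q'" "Q \<subseteq> Q'" shows "Pq Q' (Pq Q x) = Pq Q x"
proof -
  have "finite Q" using assms finite_subset by blast
  then show ?thesis unfolding Pq_def[of Q] using Pq_E[OF assms(1)] assms(2) by (simp add: Pq_sum subset_iff)
qed

lemma Pq_mono: assumes "finite Q'" "Q \<subseteq> Q'" shows "nr (x - Pq Q' x) \<le> nr (x - Pq Q x)"
proof -
  have eq: "x - Pq Q' x = (x - Pq Q x) - Pq Q' (x - Pq Q x)"
    using Pq_Pq[OF assms] by (simp add: Pq_diff)
  show ?thesis unfolding eq by (rule IPq_nr[OF assms(1)])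
qed

lemma Upw_Pq: "Upw n (Pq Q x) = (\<Sum>z\<in>Q. sm (z^n) (Ep z x))"
  by (simp add: Pq_def Upw_sum Upw_E)

lemma Pq_conv: assumes "e > 0"
  shows "\<exists>Q0. finite Q0 \<and> Q0 \<subseteq> sigma_pp sm U \<and> (\<forall>Q. finite Q \<longrightarrow> Q0 \<subseteq> Q \<longrightarrow> nr (x - Pq Q x) < e)"
proof -
  obtain y where y: "y \<in> hspan sm {v. \<exists>z. U v = sm z v}" "nr (x - y) < e"
    using almost_per assms unfolding almost_periodic_def by blast
  obtain I :: "nat set" and c v where I: "finite I" "\<And>i. i \<in> I \<Longrightarrow> v i \<in> {v. \<exists>z. U v = sm z v}"
    "y = (\<Sum>i\<in>I. sm (c i) (v i))" by (metis hspan_sum[OF y(1)])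
  define zz where "zz i = (SOME z. U (v i) = sm z (v i))" for i
  have zz: "U (v i) = sm (zz i) (v i)" if "i \<in> I" for i
    using I(2)[OF that] unfolding zz_def by (metis (mono_tags, lifting) mem_Collect_eq someI_ex)
  define Q0 where "Q0 = zz ` {i\<in>I. v i \<noteq> 0}"
  have "finite Q0" using I(1) by (simp add: Q0_def)
  moreover have "Q0 \<subseteq> sigma_pp sm U" unfolding Q0_def sigma_pp_def using zz by blast
  moreover have "nr (x - Pq Q x) < e" if Q: "finite Q" "Q0 \<subseteq> Q" for Q
  proof -
    have "Pq Q (v i) = v i" if "i \<in> I" for i
    proof (cases "v i = 0")
      case False
      then have "zz i \<in> Q" using Q(2) that unfolding Q0_def by blast
      then show ?thesis using Pq_eig[OF Q(1) zz[OF that]] by simp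
    qed simp
    then have "Pq Q y = y" unfolding I(3) by (simp add: Pq_sum Pq_sm)
    then have eq: "x - Pq Q x = (x - y) - Pq Q (x - y)" by (simp add: Pq_diff)
    have "nr (x - Pq Q x) \<le> nr (x - y)" unfolding eq by (rule IPq_nr[OF Q(1)])
    then show ?thesis using y(2) by simp
  qed
  ultimately show ?thesis by blast
qed

end

definition cell :: "real \<Rightarrow> complex \<Rightarrow> int \<times> int" where
  "cell K a = (\<lfloor>Re a * K\<rfloor>, \<lfloor>Im a * K\<rfloor>)"

lemma floor_eq_close: fixes a b :: real assumes "\<lfloor>a\<rfloor> = \<lfloor>b\<rfloor>" shows "\<bar>a - b\<bar> < 1"
  using assms by linarith

lemma cell_close: assumes "K > 0" "cell K a = cell K b" shows "cmod (a - b) < 2 / K"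
proof -
  have "\<bar>Re a * K - Re b * K\<bar> < 1" "\<bar>Im a * K - Im b * K\<bar> < 1"
    using assms(2) unfolding cell_def by (auto intro: floor_eq_close)
  then have "\<bar>Re a - Re b\<bar> * K < 1" "\<bar>Im a - Im b\<bar> * K < 1"
    using assms(1) by (simp_all add: left_diff_distrib[symmetric] abs_mult)
  then have "\<bar>Re (a - b)\<bar> < 1 / K" "\<bar>Im (a - b)\<bar> < 1 / K" using assms(1) by (simp_all add: field_simps)
  then show ?thesis using cmod_le[of "a - b"] by simp
qed

lemma cell_range: assumes "K > 0" "cmod a \<le> 1"
  shows "cell K a \<in> {-\<lceil>K\<rceil>..\<lceil>K\<rceil>} \<times> {-\<lceil>K\<rceil>..\<lceil>K\<rceil>}"
proof -
  have "\<bar>Re a\<bar> \<le> 1" "\<bar>Im a\<bar> \<le> 1" using assms(2) abs_Re_le_cmod abs_Im_le_cmod order_trans by blast+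
  then have "\<bar>Re a * K\<bar> \<le> K" "\<bar>Im a * K\<bar> \<le> K" using assms(1) by (simp_all add: abs_mult mult_left_le_one_le)
  then show ?thesis unfolding cell_def
    by (auto simp: abs_le_iff) (linarith | meson ceiling_correct floor_le_ceiling le_floor_iff order_trans)+
qed

context ap
begin

definition TB :: "'a set \<Rightarrow> bool" where
  "TB S \<longleftrightarrow> (\<forall>e>0. \<exists>F. finite F \<and> (\<forall>x\<in>S. \<exists>y\<in>F. nr (x - y) < e))"

lemma TB_D: "TB S \<Longrightarrow> e > 0 \<Longrightarrow> \<exists>F. finite F \<and> (\<forall>x\<in>S. \<exists>y\<in>F. nr (x - y) < e)"
  unfolding TB_def by blast

lemma TB_single: "TB {x}"
  unfolding TB_def by (intro allI impI exI[of _ "{x}"]) auto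

lemma TB_subset: assumes "TB S" "T \<subseteq> S" shows "TB T"
  unfolding TB_def
proof (intro allI impI)
  fix e :: real assume "e > 0"
  then obtain F where "finite F" "\<forall>x\<in>S. \<exists>y\<in>F. nr (x - y) < e" using TB_D[OF assms(1) \<open>e > 0\<close>] by (elim exE conjE)
  then show "\<exists>F. finite F \<and> (\<forall>x\<in>T. \<exists>y\<in>F. nr (x - y) < e)" using assms(2) by (intro exI[of _ F]) blast
qed

lemma TB_Un: assumes "TB S" "TB T" shows "TB (S \<union> T)"
  unfolding TB_def
proof (intro allI impI)
  fix e :: real assume "e > 0"
  then obtain F G where "finite F" "\<forall>x\<in>S. \<exists>y\<in>F. nr (x - y) < e" "finite G" "\<forall>x\<in>T. \<exists>y\<in>G. nr (x - y) < e"
    using TB_D[OF assms(1) \<open>e > 0\<close>] TB_D[OF assms(2) \<open>e > 0\<close>] by (elim exE conjE) blast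
  then show "\<exists>F. finite F \<and> (\<forall>x\<in>S \<union> T. \<exists>y\<in>F. nr (x - y) < e)"
    by (intro exI[of _ "F \<union> G"]) blast
qed

lemma TB_UN: assumes "finite I" "\<And>i. i \<in> I \<Longrightarrow> TB (S i)" shows "TB (\<Union>i\<in>I. S i)"
  using assms
proof (induction I rule: finite_induct)
  case empty then show ?case unfolding TB_def by (intro allI impI exI[of _ "{}"]) simp
next
  case (insert i I) then show ?case by (simp add: TB_Un)
qed

lemma TB_image: assumes "TB S" "\<And>x y. nr (T x - T y) \<le> C * nr (x - y)" "C \<ge> 0" shows "TB (T ` S)"
  unfolding TB_def
proof (intro allI impI)
  fix e :: real assume e: "e > 0"
  then have pos: "e / (C + 1) > 0" using assms(3) by simp
  obtain F where F: "finite F" "\<forall>x\<in>S. \<exists>y\<in>F. nr (x - y) < e / (C + 1)"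
    using TB_D[OF assms(1) pos] by (elim exE conjE)
  have "\<exists>y'\<in>T ` F. nr (T x - y') < e" if xS: "x \<in> S" for x
  proof -
    obtain y where y: "y \<in> F" "nr (x - y) < e / (C + 1)" using F xS by blast
    have "nr (T x - T y) \<le> C * nr (x - y)" by (rule assms(2))
    also have "\<dots> \<le> C * (e / (C + 1))" using y(2) assms(3) by (intro mult_left_mono) auto
    also have "\<dots> < e" using e assms(3) by (simp add: field_simps)
    finally show ?thesis using y(1) by blast
  qed
  then show "\<exists>F. finite F \<and> (\<forall>x\<in>T ` S. \<exists>y\<in>F. nr (x - y) < e)" using F(1) by blast
qed

lemma orbit_TB: "TB (range (\<lambda>n. Upw n x))"
  unfolding TB_def
proof (intro allI impI)
  fix e :: real assume e: "e > 0"
  obtain Q where Q: "finite Q" "Q \<subseteq> sigma_pp sm U" "\<forall>Q'. finite Q' \<longrightarrow> Q \<subseteq> Q' \<longrightarrow> nr (x - Pq Q' x) < e / 3"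
    using Pq_conv[of "e/3" x] e by auto
  have xy: "nr (x - Pq Q x) < e / 3" using Q by blast
  define B where "B = (\<Sum>z\<in>Q. nr (Ep z x)) + 1"
  have B: "B > 0" "(\<Sum>z\<in>Q. nr (Ep z x)) \<le> B" unfolding B_def by (simp_all add: sum_nonneg add_nonneg_pos)
  define K :: real where "K = 6 * B / e"
  have K: "K > 0" using B e by (simp add: K_def)
  define g where "g n = restrict (\<lambda>z. cell K (z ^ n)) Q" for n
  have unit: "cmod (z ^ n) \<le> 1" if "z \<in> Q" for z n
    using Q(2) that sigma_unit by (auto simp: norm_power)
  have "range g \<subseteq> PiE Q (\<lambda>_. {-\<lceil>K\<rceil>..\<lceil>K\<rceil>} \<times> {-\<lceil>K\<rceil>..\<lceil>K\<rceil>})"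
    unfolding g_def using cell_range[OF K] unit by auto
  then have fin: "finite (range g)" using Q(1) by (meson finite_PiE finite_SigmaI finite_atLeastAtMost_int finite_subset)
  define rep where "rep c = (SOME n. g n = c)" for c
  have rep: "g (rep (g n)) = g n" for n unfolding rep_def by (metis (mono_tags) someI_ex)
  define F where "F = (\<lambda>c. Upw (rep c) x) ` range g"
  have "finite F" using fin by (simp add: F_def)
  moreover have "\<exists>y\<in>F. nr (Upw n x - y) < e" for n
  proof -
    define m where "m = rep (g n)"
    have close: "cmod (z ^ n - z ^ m) < 2 / K" if "z \<in> Q" for z
    proof -
      have "cell K (z ^ n) = cell K (z ^ m)" using fun_cong[OF rep[of n], of z] that
        by (simp add: g_def m_def)
      then show ?thesis using cell_close[OF K] by simp
    qed
    let ?y = "Pq Q x"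
    have eq: "Upw n x - Upw m x = Upw n (x - ?y) + (Upw n ?y - Upw m ?y) - Upw m (x - ?y)"
      by (simp add: Upw_diff algebra_simps)
    have "nr (Upw n x - Upw m x) \<le> nr (Upw n (x - ?y) + (Upw n ?y - Upw m ?y)) + nr (Upw m (x - ?y))"
      unfolding eq by (rule nr_diff_le)
    also have "\<dots> \<le> nr (Upw n (x - ?y)) + nr (Upw n ?y - Upw m ?y) + nr (Upw m (x - ?y))"
      using nr_triangle[of "Upw n (x - ?y)" "Upw n ?y - Upw m ?y"] by linarith
    also have "nr (Upw n ?y - Upw m ?y) \<le> (\<Sum>z\<in>Q. cmod (z ^ n - z ^ m) * nr (Ep z x))"
    proof -
      have "Upw n ?y - Upw m ?y = (\<Sum>z\<in>Q. sm (z ^ n - z ^ m) (Ep z x))"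
        by (simp add: Upw_Pq sm_diff_left sum_subtractf)
      then show ?thesis using nr_sum[of "\<lambda>z. sm (z ^ n - z ^ m) (Ep z x)" Q] by (simp add: nr_sm)
    qed
    also have "(\<Sum>z\<in>Q. cmod (z ^ n - z ^ m) * nr (Ep z x)) \<le> (\<Sum>z\<in>Q. (2 / K) * nr (Ep z x))"
      using close by (intro sum_mono mult_right_mono) (auto simp: less_imp_le)
    also have "\<dots> = (2 / K) * (\<Sum>z\<in>Q. nr (Ep z x))" by (simp add: sum_distrib_left)
    also have "\<dots> \<le> (2 / K) * B" using B K by (intro mult_left_mono) auto
    also have "(2 / K) * B = e / 3" using B e by (simp add: K_def field_simps)
    finally have "nr (Upw n x - Upw m x) < e" using xy by simp
    moreover have "Upw m x \<in> F" unfolding F_def m_def by blast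
    ultimately show ?thesis by blast
  qed
  ultimately show "\<exists>F. finite F \<and> (\<forall>y\<in>range (\<lambda>n. Upw n x). \<exists>y'\<in>F. nr (y - y') < e)" by blast
qed

lemma TB_orbits: assumes "TB S" shows "TB {Upw n v | n v. v \<in> S}"
  unfolding TB_def
proof (intro allI impI)
  fix e :: real assume e: "e > 0"
  have pos: "e / 2 > 0" using e by simp
  obtain F where F: "finite F" "\<forall>x\<in>S. \<exists>y\<in>F. nr (x - y) < e / 2" using TB_D[OF assms(1) pos] by (elim exE conjE)
  have "\<forall>y\<in>F. \<exists>G. finite G \<and> (\<forall>w\<in>range (\<lambda>n. Upw n y). \<exists>g\<in>G. nr (w - g) < e / 2)"
    using TB_D[OF orbit_TB pos] by blast
  then obtain G where G: "\<And>y. y \<in> F \<Longrightarrow> finite (G y) \<and> (\<forall>w\<in>range (\<lambda>n. Upw n y). \<exists>g\<in>G y. nr (w - g) < e / 2)"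
    by metis
  have "\<exists>g\<in>(\<Union>y\<in>F. G y). nr (Upw n v - g) < e" if vS: "v \<in> S" for n v
  proof -
    obtain y where y: "y \<in> F" "nr (v - y) < e / 2" using F vS by blast
    obtain g where g: "g \<in> G y" "nr (Upw n y - g) < e / 2" using G[OF y(1)] by blast
    have "nr (Upw n v - g) \<le> nr (Upw n v - Upw n y) + nr (Upw n y - g)" by (rule nr_diff_triangle)
    also have "nr (Upw n v - Upw n y) = nr (v - y)" by (simp add: Upw_diff[symmetric])
    finally have "nr (Upw n v - g) < e" using y g by linarith
    then show ?thesis using g(1) y(1) by blast
  qed
  moreover have "finite (\<Union>y\<in>F. G y)" using F(1) G by blast
  ultimately show "\<exists>F. finite F \<and> (\<forall>x\<in>{Upw n v | n v. v \<in> S}. \<exists>y\<in>F. nr (x - y) < e)" by blast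
qed

lemma TB_unif: assumes "TB S" "e > 0"
  shows "\<exists>Q0. finite Q0 \<and> Q0 \<subseteq> sigma_pp sm U \<and> (\<forall>Q. finite Q \<longrightarrow> Q0 \<subseteq> Q \<longrightarrow> (\<forall>w\<in>S. nr (w - Pq Q w) < e))"
proof -
  have pos: "e / 2 > 0" using assms(2) by simp
  obtain F where F: "finite F" "\<forall>x\<in>S. \<exists>y\<in>F. nr (x - y) < e / 2" using TB_D[OF assms(1) pos] by (elim exE conjE)
  have "\<forall>y\<in>F. \<exists>Q0. finite Q0 \<and> Q0 \<subseteq> sigma_pp sm U \<and> (\<forall>Q. finite Q \<longrightarrow> Q0 \<subseteq> Q \<longrightarrow> nr (y - Pq Q y) < e / 2)"
    using Pq_conv[OF pos] by blast
  then obtain Qf where Qf: "\<And>y. y \<in> F \<Longrightarrow> finite (Qf y) \<and> Qf y \<subseteq> sigma_pp sm U \<and> (\<forall>Q. finite Q \<longrightarrow> Qf y \<subseteq> Q \<longrightarrow> nr (y - Pq Q y) < e / 2)"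
    by metis
  define Q0 where "Q0 = (\<Union>y\<in>F. Qf y)"
  have "finite Q0" "Q0 \<subseteq> sigma_pp sm U" using F(1) Qf unfolding Q0_def by auto
  moreover have "nr (w - Pq Q w) < e" if Q: "finite Q" "Q0 \<subseteq> Q" and w: "w \<in> S" for Q w
  proof -
    obtain y where y: "y \<in> F" "nr (w - y) < e / 2" using F w by blast
    have "Qf y \<subseteq> Q" using Q(2) y(1) unfolding Q0_def by blast
    then have 1: "nr (y - Pq Q y) < e / 2" using Qf[OF y(1)] Q(1) by blast
    have eq: "w - Pq Q w = ((w - y) - Pq Q (w - y)) + (y - Pq Q y)" by (simp add: Pq_diff algebra_simps)
    have "nr (w - Pq Q w) \<le> nr ((w - y) - Pq Q (w - y)) + nr (y - Pq Q y)" unfolding eq by (rule nr_triangle)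
    also have "nr ((w - y) - Pq Q (w - y)) \<le> nr (w - y)" by (rule IPq_nr[OF Q(1)])
    finally show ?thesis using y(2) 1 by linarith
  qed
  ultimately show ?thesis by blast
qed

end

lemma alt_cong: "(\<And>i. i \<in> {1..m} \<Longrightarrow> B i = B' i) \<Longrightarrow> (\<And>i. i \<in> {1..m} \<Longrightarrow> A i = A' i)
   \<Longrightarrow> alt m B A = alt m B' A'"
  by (induction m) auto

lemma alt_Suc_apply: "alt (Suc m) B A x = alt m B A (B (Suc m) (A (Suc m) x))"
  by simp

lemma word_alt: assumes "k \<ge> 1" shows "word k B A = alt (2*k) B (A(2*k := id))"
proof -
  obtain j where j: "2*k = Suc j" using assms by (cases "2*k") auto
  have jj: "2*k - 1 = j" using j by simp
  have "alt j B (A(Suc j := id)) = alt j B A" by (rule alt_cong) auto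
  then have "alt (Suc j) B (A(Suc j := id)) = alt j B A \<circ> B (Suc j)" by simp
  then show ?thesis unfolding word_def jj j by simp
qed

context hs
begin

lemma sm_comm2: "sm a (sm b x) = sm b (sm a x)"
  by (metis sm_mult mult.commute)

definition lin :: "('a \<Rightarrow> 'a) \<Rightarrow> bool" where
  "lin T \<longleftrightarrow> (\<forall>x y. T (x + y) = T x + T y) \<and> (\<forall>a x. T (sm a x) = sm a (T x))"

lemma linD: assumes "lin T"
  shows "T (x + y) = T x + T y" "T (sm a x) = sm a (T x)" "T 0 = 0" "T (x - y) = T x - T y"
    "T (\<Sum>i\<in>I. f i) = (\<Sum>i\<in>I. T (f i))"
proof -
  show 1: "T (x + y) = T x + T y" "T (sm a x) = sm a (T x)" using assms unfolding lin_def by blast+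
  have 2: "\<And>a x. T (sm a x) = sm a (T x)" using assms unfolding lin_def by blast
  show "T 0 = 0" using 2[of 0 0] by simp
  have 3: "\<And>x y. T (x + y) = T x + T y" using assms unfolding lin_def by blast
  show "T (x - y) = T x - T y" using 3[of "x - y" y] by (simp add: algebra_simps)
  show "T (\<Sum>i\<in>I. f i) = (\<Sum>i\<in>I. T (f i))"
    by (induction I rule: infinite_finite_induct) (auto simp: 3 2[of 0 0, simplified])
qed

lemma lin_id: "lin id" by (simp add: lin_def)
lemma lin_id': "lin (\<lambda>a. a)" by (simp add: lin_def)
lemma lin_comp: "lin S \<Longrightarrow> lin T \<Longrightarrow> lin (S \<circ> T)" by (simp add: lin_def)

lemma alt_lin: "(\<And>i. i \<in> {1..m} \<Longrightarrow> lin (B i) \<and> lin (A i)) \<Longrightarrow> lin (alt m B A)"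
proof (induction m)
  case 0 then show ?case by (simp add: lin_id')
next
  case (Suc m)
  then have "lin (alt m B A)" by simp
  moreover have "lin (B (Suc m))" "lin (A (Suc m))" using Suc.prems by auto
  ultimately show ?case by (simp add: lin_def)
qed

lemma alt_bound:
  assumes "\<And>i x. i \<in> {1..m} \<Longrightarrow> nr (B i x) \<le> nr x"
    and "\<And>i x. i \<in> {1..m} \<Longrightarrow> nr (A i x) \<le> C * nr x" and "C \<ge> 0"
  shows "nr (alt m B A x) \<le> C ^ m * nr x"
  using assms(1,2)
proof (induction m arbitrary: x)
  case 0 then show ?case by simp
next
  case (Suc m)
  have "nr (alt (Suc m) B A x) = nr (alt m B A (B (Suc m) (A (Suc m) x)))" by simp
  also have "\<dots> \<le> C ^ m * nr (B (Suc m) (A (Suc m) x))" using Suc by simp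
  also have "\<dots> \<le> C ^ m * (C * nr x)"
  proof (intro mult_left_mono)
    show "nr (B (Suc m) (A (Suc m) x)) \<le> C * nr x"
      using Suc.prems(1)[of "Suc m" "A (Suc m) x"] Suc.prems(2)[of "Suc m" x] by simp
  qed (use assms(3) in simp)
  finally show ?case by (simp add: mult_ac)
qed

lemma alt_tele:
  assumes Blin: "\<And>i. i \<in> {1..m} \<Longrightarrow> lin (B' i) \<and> lin (A i)"
    and Bc: "\<And>i x. i \<in> {1..m} \<Longrightarrow> nr (B' i x) \<le> nr x"
    and Ab: "\<And>i x. i \<in> {1..m} \<Longrightarrow> nr (A i x) \<le> C * nr x" and C: "C \<ge> 1"
    and Bmap: "\<And>i j v. i \<in> {1..m} \<Longrightarrow> j < D \<Longrightarrow> v \<in> K j \<Longrightarrow> B i (A i v) \<in> K (Suc j)"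
    and err: "\<And>i j v. i \<in> {1..m} \<Longrightarrow> j \<le> D \<Longrightarrow> v \<in> K j \<Longrightarrow> nr (B i (A i v) - B' i (A i v)) \<le> \<epsilon>"
    and eps: "\<epsilon> \<ge> 0"
    and mD: "m \<le> D" and x: "x \<in> K (D - m)"
  shows "nr (alt m B A x - alt m B' A x) \<le> real m * C ^ m * \<epsilon>"
  using Blin Bc Ab Bmap err mD x
proof (induction m arbitrary: x)
  case 0 then show ?case by simp
next
  case (Suc m)
  define y where "y = B (Suc m) (A (Suc m) x)"
  define y' where "y' = B' (Suc m) (A (Suc m) x)"
  have yK: "y \<in> K (D - m)"
  proof -
    have "D - Suc m < D" "Suc (D - Suc m) = D - m" using Suc.prems(6) by auto
    then show ?thesis using Suc.prems(4)[of "Suc m" "D - Suc m" x] Suc.prems(7) unfolding y_def by auto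
  qed
  have IH: "nr (alt m B A y - alt m B' A y) \<le> real m * C ^ m * \<epsilon>"
    by (rule Suc.IH) (use Suc.prems yK in auto)
  have lin': "lin (alt m B' A)" by (rule alt_lin) (use Suc.prems(1) in auto)
  have "nr (alt m B' A y - alt m B' A y') = nr (alt m B' A (y - y'))" using linD(4)[OF lin'] by simp
  also have "\<dots> \<le> C ^ m * nr (y - y')"
    by (rule alt_bound) (use Suc.prems(2,3) C in auto)
  also have "nr (y - y') \<le> \<epsilon>" unfolding y_def y'_def
    by (rule Suc.prems(5)[of "Suc m" "D - Suc m" x]) (use Suc.prems(7) in auto)
  finally have 2: "nr (alt m B' A y - alt m B' A y') \<le> C ^ m * \<epsilon>"
    using C by (simp add: mult_left_mono)
  have "alt (Suc m) B A x - alt (Suc m) B' A x = (alt m B A y - alt m B' A y) + (alt m B' A y - alt m B' A y')"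
    by (simp add: y_def y'_def)
  then have "nr (alt (Suc m) B A x - alt (Suc m) B' A x) \<le> real m * C ^ m * \<epsilon> + C ^ m * \<epsilon>"
    using nr_triangle[of "alt m B A y - alt m B' A y" "alt m B' A y - alt m B' A y'"] IH 2 by simp
  also have "\<dots> = real (Suc m) * C ^ m * \<epsilon>" by (simp add: algebra_simps)
  also have "\<dots> \<le> real (Suc m) * C ^ Suc m * \<epsilon>"
  proof -
    have "C ^ m \<le> C ^ Suc m" using C by (simp add: power_increasing)
    then show ?thesis using eps by (intro mult_right_mono mult_left_mono) auto
  qed
  finally show ?case .
qed

lemma alt_expand:
  assumes Alin: "\<And>i. i \<in> {1..m} \<Longrightarrow> lin (A i)"
    and Elin: "\<And>i z. i \<in> {1..m} \<Longrightarrow> lin (Eo i z)"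
    and fin: "\<And>i. i \<in> {1..m} \<Longrightarrow> finite (Qs i)"
  shows "alt m (\<lambda>i v. \<Sum>z\<in>Qs i. sm (f i z) (Eo i z v)) A x =
    (\<Sum>c\<in>PiE {1..m} Qs. sm (\<Prod>i\<in>{1..m}. f i (c i)) (alt m (\<lambda>i. Eo i (c i)) A x))"
  using Alin Elin fin
proof (induction m arbitrary: x)
  case 0 then show ?case by simp
next
  case (Suc m)
  let ?B = "\<lambda>i v. \<Sum>z\<in>Qs i. sm (f i z) (Eo i z v)"
  have linB: "lin (alt m ?B A)"
  proof (rule alt_lin)
    fix i assume i: "i \<in> {1..m}"
    have "lin (Eo i z)" for z using Suc.prems(2)[of i z] i by auto
    then have "lin (?B i)" unfolding lin_def
      by (auto simp: sum.distrib sm_add_right sm_sum_right sm_comm2)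
    then show "lin (?B i) \<and> lin (A i)" using Suc.prems(1) i by auto
  qed
  have "alt (Suc m) ?B A x = alt m ?B A (\<Sum>z\<in>Qs (Suc m). sm (f (Suc m) z) (Eo (Suc m) z (A (Suc m) x)))"
    by simp
  also have "\<dots> = (\<Sum>z\<in>Qs (Suc m). sm (f (Suc m) z) (alt m ?B A (Eo (Suc m) z (A (Suc m) x))))"
    by (simp add: linD(5)[OF linB] linD(2)[OF linB])
  also have "\<dots> = (\<Sum>z\<in>Qs (Suc m). \<Sum>c\<in>PiE {1..m} Qs.
      sm (f (Suc m) z * (\<Prod>i\<in>{1..m}. f i (c i))) (alt m (\<lambda>i. Eo i (c i)) A (Eo (Suc m) z (A (Suc m) x))))"
    using Suc by (simp add: sm_sum_right sm_mult)
  also have "\<dots> = (\<Sum>(z, c)\<in>Qs (Suc m) \<times> PiE {1..m} Qs.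
      sm (f (Suc m) z * (\<Prod>i\<in>{1..m}. f i (c i))) (alt m (\<lambda>i. Eo i (c i)) A (Eo (Suc m) z (A (Suc m) x))))"
    by (rule sum.cartesian_product)
  also have "\<dots> = (\<Sum>c\<in>PiE {1..Suc m} Qs. sm (\<Prod>i\<in>{1..Suc m}. f i (c i)) (alt (Suc m) (\<lambda>i. Eo i (c i)) A x))"
  proof (rule sum.reindex_bij_witness[of _ "\<lambda>g. (g (Suc m), g(Suc m := undefined))" "\<lambda>(z, c). c(Suc m := z)"])
    fix zc assume zc: "zc \<in> Qs (Suc m) \<times> PiE {1..m} Qs"
    obtain z c where zc': "zc = (z, c)" by (cases zc)
    have c: "c \<in> PiE {1..m} Qs" "z \<in> Qs (Suc m)" using zc zc' by auto
    show "(case zc of (z, c) \<Rightarrow> c(Suc m := z)) \<in> PiE {1..Suc m} Qs"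
      using c zc' by (auto simp: PiE_def extensional_def Pi_def)
    show "((case zc of (z, c) \<Rightarrow> c(Suc m := z)) (Suc m), (case zc of (z, c) \<Rightarrow> c(Suc m := z))(Suc m := undefined)) = zc"
      using c zc' by (auto simp: PiE_def extensional_def fun_eq_iff)
    have p: "(\<Prod>i\<in>{1..Suc m}. f i ((c(Suc m := z)) i)) = f (Suc m) z * (\<Prod>i\<in>{1..m}. f i (c i))"
    proof -
      have "{1..Suc m} = insert (Suc m) {1..m}" by auto
      then show ?thesis by (simp add: prod.insert)
    qed
    have a: "alt (Suc m) (\<lambda>i. Eo i ((c(Suc m := z)) i)) A x = alt m (\<lambda>i. Eo i (c i)) A (Eo (Suc m) z (A (Suc m) x))"
    proof -
      have "alt m (\<lambda>i. Eo i ((c(Suc m := z)) i)) A = alt m (\<lambda>i. Eo i (c i)) A" by (rule alt_cong) auto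
      then show ?thesis by simp
    qed
    show "sm (\<Prod>i\<in>{1..Suc m}. f i ((case zc of (z, c) \<Rightarrow> c(Suc m := z)) i))
          (alt (Suc m) (\<lambda>i. Eo i ((case zc of (z, c) \<Rightarrow> c(Suc m := z)) i)) A x) =
        (case zc of (z, c) \<Rightarrow> sm (f (Suc m) z * (\<Prod>i\<in>{1..m}. f i (c i))) (alt m (\<lambda>i. Eo i (c i)) A (Eo (Suc m) z (A (Suc m) x))))"
      using p a zc' by (simp add: ac_simps)
  next
    fix g assume g: "g \<in> PiE {1..Suc m} Qs"
    show "(g (Suc m), g(Suc m := undefined)) \<in> Qs (Suc m) \<times> PiE {1..m} Qs"
      using g by (auto simp: PiE_def extensional_def Pi_def)
    show "(case (g (Suc m), g(Suc m := undefined)) of (z, c) \<Rightarrow> c(Suc m := z)) = g" by simp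
  qed
  finally show ?case .
qed

end

definition fib :: "nat \<Rightarrow> (nat \<Rightarrow> nat) \<Rightarrow> nat \<Rightarrow> nat set" where
  "fib k \<alpha> l = {i\<in>{1..2*k}. \<alpha> i = l}"
definition fp :: "nat \<Rightarrow> (nat \<Rightarrow> nat) \<Rightarrow> nat \<Rightarrow> nat" where "fp k \<alpha> l = Min (fib k \<alpha> l)"
definition sp :: "nat \<Rightarrow> (nat \<Rightarrow> nat) \<Rightarrow> nat \<Rightarrow> nat" where "sp k \<alpha> l = Max (fib k \<alpha> l)"
definition first :: "nat \<Rightarrow> (nat \<Rightarrow> nat) \<Rightarrow> nat \<Rightarrow> bool" where
  "first k \<alpha> i \<longleftrightarrow> (\<exists>j\<in>{1..2*k}. \<alpha> j = \<alpha> i \<and> i < j)"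

lemma zsharp_first: "zsharp k \<alpha> z i = (if first k \<alpha> i then z (\<alpha> i) else cnj (z (\<alpha> i)))"
  by (simp add: zsharp_def first_def)

context
  fixes k and \<alpha> assumes pp: "pair_partition k \<alpha>"
begin

lemma pp_img: "i \<in> {1..2*k} \<Longrightarrow> \<alpha> i \<in> {1..k}"
  using pp unfolding pair_partition_def by blast

lemma pp_two: assumes "l \<in> {1..k}" shows "fib k \<alpha> l = {fp k \<alpha> l, sp k \<alpha> l}" "fp k \<alpha> l < sp k \<alpha> l"
proof -
  have "card (fib k \<alpha> l) = 2" using pp assms unfolding pair_partition_def fib_def by blast
  then obtain a b where ab: "fib k \<alpha> l = {a, b}" "a \<noteq> b" unfolding card_2_iff by blast
  have "fp k \<alpha> l = min a b" "sp k \<alpha> l = max a b" unfolding fp_def sp_def ab by auto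
  then show "fib k \<alpha> l = {fp k \<alpha> l, sp k \<alpha> l}" "fp k \<alpha> l < sp k \<alpha> l" using ab by (auto simp: min_def max_def)
qed

lemma fp_mem: assumes "l \<in> {1..k}" shows "fp k \<alpha> l \<in> {1..2*k}" "\<alpha> (fp k \<alpha> l) = l"
  using pp_two(1)[OF assms] unfolding fib_def by blast+

lemma sp_mem: assumes "l \<in> {1..k}" shows "sp k \<alpha> l \<in> {1..2*k}" "\<alpha> (sp k \<alpha> l) = l"
  using pp_two(1)[OF assms] unfolding fib_def by blast+

lemma pp_cases: assumes "i \<in> {1..2*k}" shows "i = fp k \<alpha> (\<alpha> i) \<or> i = sp k \<alpha> (\<alpha> i)"
proof -
  have "i \<in> fib k \<alpha> (\<alpha> i)" using assms unfolding fib_def by simp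
  then show ?thesis using pp_two(1)[OF pp_img[OF assms]] by blast
qed

lemma first_fp: assumes "l \<in> {1..k}" shows "first k \<alpha> (fp k \<alpha> l)"
  unfolding first_def using sp_mem[OF assms] fp_mem[OF assms] pp_two(2)[OF assms] by auto

lemma not_first_sp: assumes "l \<in> {1..k}" shows "\<not> first k \<alpha> (sp k \<alpha> l)"
proof
  assume "first k \<alpha> (sp k \<alpha> l)"
  then obtain j where j: "j \<in> {1..2*k}" "\<alpha> j = l" "sp k \<alpha> l < j"
    unfolding first_def using sp_mem(2)[OF assms] by auto
  then have "j \<in> fib k \<alpha> l" unfolding fib_def by simp
  then show False using j(3) pp_two(1)[OF assms] pp_two(2)[OF assms] by auto
qed

lemma first_iff: assumes "i \<in> {1..2*k}" shows "first k \<alpha> i \<longleftrightarrow> i = fp k \<alpha> (\<alpha> i)"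
  using pp_cases[OF assms] first_fp[OF pp_img[OF assms]] not_first_sp[OF pp_img[OF assms]]
    pp_two(2)[OF pp_img[OF assms]] by auto

lemma prod_pairs:
  fixes c :: "nat \<Rightarrow> 'b::comm_monoid_mult"
  shows "(\<Prod>i\<in>{1..2*k}. c i ^ (n (\<alpha> i))) = (\<Prod>l\<in>{1..k}. (c (fp k \<alpha> l) * c (sp k \<alpha> l)) ^ n l)"
proof -
  have "(\<Prod>i\<in>{1..2*k}. c i ^ (n (\<alpha> i))) = (\<Prod>l\<in>{1..k}. \<Prod>i\<in>{x. x \<in> {1..2*k} \<and> \<alpha> x = l}. c i ^ (n (\<alpha> i)))"
    by (rule prod.group[symmetric]) (use pp_img in auto)
  also have "\<dots> = (\<Prod>l\<in>{1..k}. (c (fp k \<alpha> l) * c (sp k \<alpha> l)) ^ n l)"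
  proof (rule prod.cong)
    fix l assume l: "l \<in> {1..k}"
    have "{x. x \<in> {1..2*k} \<and> \<alpha> x = l} = {fp k \<alpha> l, sp k \<alpha> l}" using pp_two(1)[OF l] unfolding fib_def by simp
    moreover have "fp k \<alpha> l \<noteq> sp k \<alpha> l" using pp_two(2)[OF l] by simp
    ultimately show "(\<Prod>i\<in>{x. x \<in> {1..2*k} \<and> \<alpha> x = l}. c i ^ (n (\<alpha> i))) = (c (fp k \<alpha> l) * c (sp k \<alpha> l)) ^ n l"
      using fp_mem[OF l] sp_mem[OF l] by (simp add: power_mult_distrib)
  qed simp
  finally show ?thesis .
qed

lemma avg_factor:
  fixes c :: "nat \<Rightarrow> complex"
  shows "(1 / of_nat N ^ k) * (\<Sum>n\<in>PiE {1..k} (\<lambda>_. {..<N}). \<Prod>i\<in>{1..2*k}. c i ^ (n (\<alpha> i)))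
    = (\<Prod>l\<in>{1..k}. (1 / of_nat N) * (\<Sum>m<N. (c (fp k \<alpha> l) * c (sp k \<alpha> l)) ^ m))"
proof -
  have "(\<Sum>n\<in>PiE {1..k} (\<lambda>_. {..<N}). \<Prod>i\<in>{1..2*k}. c i ^ (n (\<alpha> i)))
      = (\<Sum>n\<in>PiE {1..k} (\<lambda>_. {..<N}). \<Prod>l\<in>{1..k}. (c (fp k \<alpha> l) * c (sp k \<alpha> l)) ^ n l)"
    by (intro sum.cong refl prod_pairs)
  also have "\<dots> = (\<Prod>l\<in>{1..k}. \<Sum>m<N. (c (fp k \<alpha> l) * c (sp k \<alpha> l)) ^ m)"
    by (rule prod_sum_PiE[symmetric]) auto
  finally have 1: "(\<Sum>n\<in>PiE {1..k} (\<lambda>_. {..<N}). \<Prod>i\<in>{1..2*k}. c i ^ (n (\<alpha> i))) =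
      (\<Prod>l\<in>{1..k}. \<Sum>m<N. (c (fp k \<alpha> l) * c (sp k \<alpha> l)) ^ m)" .
  have 2: "(1 / of_nat N ^ k :: complex) = (\<Prod>l\<in>{1..k}. 1 / of_nat N)" by (simp add: power_one_over)
  show ?thesis unfolding 1 2 by (rule prod.distrib[symmetric])
qed

end

locale mainl = ap +
  fixes k :: nat and \<alpha> :: "nat \<Rightarrow> nat" and A :: "nat \<Rightarrow> 'a \<Rightarrow> 'a"
  assumes k1: "k \<ge> 1" and pp: "pair_partition k \<alpha>"
    and Abd: "\<forall>i\<in>{1..2*k-1}. bounded_op sm ip (A i)"
begin

definition Ai :: "nat \<Rightarrow> 'a \<Rightarrow> 'a" where "Ai = A(2*k := id)"

lemma Ai_lin: assumes "i \<in> {1..2*k}" shows "lin (Ai i)"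
proof (cases "i = 2*k")
  case True then show ?thesis by (simp add: Ai_def lin_id)
next
  case False
  then have "i \<in> {1..2*k-1}" using assms by auto
  then have "bounded_op sm ip (A i)" using Abd by blast
  then show ?thesis using False unfolding Ai_def lin_def bounded_op_def by auto
qed

lemma Ai_bound: obtains C where "C \<ge> 1" "\<And>i x. i \<in> {1..2*k} \<Longrightarrow> nr (Ai i x) \<le> C * nr x"
proof -
  have "\<forall>i\<in>{1..2*k-1}. \<exists>C. \<forall>x. nr (A i x) \<le> C * nr x" using Abd unfolding bounded_op_def by blast
  then obtain Cf where Cf: "\<And>i x. i \<in> {1..2*k-1} \<Longrightarrow> nr (A i x) \<le> Cf i * nr x" by metis
  define C where "C = 1 + (\<Sum>i\<in>{1..2*k-1}. \<bar>Cf i\<bar>)"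
  have C1: "C \<ge> 1" unfolding C_def by (simp add: sum_nonneg)
  have "nr (Ai i x) \<le> C * nr x" if i: "i \<in> {1..2*k}" for i x
  proof (cases "i = 2*k")
    case True
    have "1 * nr x \<le> C * nr x" using C1 by (intro mult_right_mono) auto
    then show ?thesis using True by (simp add: Ai_def)
  next
    case False
    then have i': "i \<in> {1..2*k-1}" using i by auto
    have "Cf i \<le> \<bar>Cf i\<bar>" by simp
    also have "\<bar>Cf i\<bar> \<le> (\<Sum>i\<in>{1..2*k-1}. \<bar>Cf i\<bar>)"
      by (rule member_le_sum) (use i' in auto)
    finally have "Cf i \<le> C" unfolding C_def by simp
    then have "Cf i * nr x \<le> C * nr x" by (simp add: mult_right_mono)
    then show ?thesis using Cf[OF i', of x] False by (simp add: Ai_def)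
  qed
  then show ?thesis using that C1 by blast
qed

lemma word_eq: "word k B A = alt (2*k) B Ai"
  unfolding Ai_def by (rule word_alt[OF k1])

lemma cesaro_eq: "cesaro sm U k \<alpha> A N x =
    sm (1 / of_nat N ^ k) (\<Sum>n\<in>PiE {1..k} (\<lambda>_. {..<N}). alt (2*k) (\<lambda>i. Upw (n (\<alpha> i))) Ai x)"
  unfolding cesaro_def word_eq Upw_def ..

definition cesT :: "(nat \<Rightarrow> complex set) \<Rightarrow> nat \<Rightarrow> 'a \<Rightarrow> 'a" where
  "cesT Qs N x = sm (1 / of_nat N ^ k)
     (\<Sum>n\<in>PiE {1..k} (\<lambda>_. {..<N}). alt (2*k) (\<lambda>i v. Upw (n (\<alpha> i)) (Pq (Qs i) v)) Ai x)"

primrec Kset :: "'a \<Rightarrow> nat \<Rightarrow> 'a set" where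
  "Kset x 0 = {x}"
| "Kset x (Suc j) = {Upw n w | n w. w \<in> (\<Union>i\<in>{1..2*k}. Ai i ` Kset x j)}"

definition Sset :: "'a \<Rightarrow> 'a set" where
  "Sset x = (\<Union>j\<in>{..2*k}. \<Union>i\<in>{1..2*k}. Ai i ` Kset x j)"

lemma lin_Upw: "lin (Upw n)" by (simp add: lin_def Upw_add Upw_sm)
lemma lin_Pq: "lin (Pq Q)" by (simp add: lin_def Pq_add Pq_sm)
lemma lin_Ep: "lin (Ep z)" by (simp add: lin_def E_add E_sm)

lemma TB_img_Ai: assumes "TB S" "i \<in> {1..2*k}" shows "TB (Ai i ` S)"
proof -
  obtain C where C: "C \<ge> 1" "\<And>i x. i \<in> {1..2*k} \<Longrightarrow> nr (Ai i x) \<le> C * nr x" using Ai_bound by blast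
  show ?thesis
  proof (rule TB_image[OF assms(1), of _ C])
    fix a b show "nr (Ai i a - Ai i b) \<le> C * nr (a - b)"
      using C(2)[OF assms(2), of "a - b"] linD(4)[OF Ai_lin[OF assms(2)]] by simp
  qed (use C in simp)
qed

lemma TB_Kset: "TB (Kset x j)"
proof (induction j)
  case 0 then show ?case by (simp add: TB_single)
next
  case (Suc j)
  have "TB (\<Union>i\<in>{1..2*k}. Ai i ` Kset x j)" by (intro TB_UN TB_img_Ai Suc) auto
  from TB_orbits[OF this] show ?case by simp
qed

lemma TB_Sset: "TB (Sset x)"
  unfolding Sset_def by (intro TB_UN TB_img_Ai TB_Kset) auto

lemma card_PiE_N: "card (PiE {1..k} (\<lambda>_. {..<N::nat})) = N ^ k"
  by (simp add: card_PiE)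

lemma err_bound:
  assumes C: "C \<ge> 1" "\<And>i x. i \<in> {1..2*k} \<Longrightarrow> nr (Ai i x) \<le> C * nr x"
    and Qs: "\<And>i. i \<in> {1..2*k} \<Longrightarrow> finite (Qs i)"
    and err: "\<And>i w. i \<in> {1..2*k} \<Longrightarrow> w \<in> Sset x \<Longrightarrow> nr (w - Pq (Qs i) w) \<le> \<epsilon>"
    and eps: "\<epsilon> \<ge> 0"
  shows "nr (cesaro sm U k \<alpha> A N x - cesT Qs N x) \<le> real (2*k) * C ^ (2*k) * \<epsilon>"
proof -
  define bd where "bd = real (2*k) * C ^ (2*k) * \<epsilon>"
  have bd0: "bd \<ge> 0" unfolding bd_def using C eps by simp
  have each: "nr (alt (2*k) (\<lambda>i. Upw (n (\<alpha> i))) Ai x - alt (2*k) (\<lambda>i v. Upw (n (\<alpha> i)) (Pq (Qs i) v)) Ai x) \<le> bd"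
    for n :: "nat \<Rightarrow> nat"
    unfolding bd_def
  proof (rule alt_tele[where K = "Kset x" and D = "2*k"])
    fix i assume i: "i \<in> {1..2*k}"
    show "lin (\<lambda>v. Upw (n (\<alpha> i)) (Pq (Qs i) v)) \<and> lin (Ai i)"
      using Ai_lin[OF i] by (simp add: lin_def Upw_add Upw_sm Pq_add Pq_sm)
    show "nr (Upw (n (\<alpha> i)) (Pq (Qs i) v)) \<le> nr v" for v using Pq_nr[OF Qs[OF i]] by simp
    show "nr (Ai i v) \<le> C * nr v" for v by (rule C(2)[OF i])
    show "Upw (n (\<alpha> i)) (Ai i v) \<in> Kset x (Suc j)" if "j < 2*k" "v \<in> Kset x j" for j v
    proof -
      have "Ai i v \<in> (\<Union>i\<in>{1..2*k}. Ai i ` Kset x j)" using that i by blast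
      then show ?thesis by auto
    qed
    show "nr (Upw (n (\<alpha> i)) (Ai i v) - Upw (n (\<alpha> i)) (Pq (Qs i) (Ai i v))) \<le> \<epsilon>"
      if "j \<le> 2*k" "v \<in> Kset x j" for j v
    proof -
      have "Ai i v \<in> Sset x" unfolding Sset_def using that i by blast
      then show ?thesis using err[OF i] by (simp add: Upw_diff[symmetric])
    qed
  qed (use C eps in auto)
  let ?P = "PiE {1..k} (\<lambda>_. {..<N})"
  define a where "a n = alt (2*k) (\<lambda>i. Upw (n (\<alpha> i))) Ai x - alt (2*k) (\<lambda>i v. Upw (n (\<alpha> i)) (Pq (Qs i) v)) Ai x" for n
  have each': "nr (a n) \<le> bd" for n unfolding a_def by (rule each)
  have "cesaro sm U k \<alpha> A N x - cesT Qs N x = sm (1 / of_nat N ^ k) (\<Sum>n\<in>?P. a n)"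
    unfolding cesaro_eq cesT_def a_def by (simp add: sm_diff_right sum_subtractf)
  also have "nr \<dots> = (1 / real N ^ k) * nr (\<Sum>n\<in>?P. a n)"
  proof -
    have "cmod (1 / of_nat N ^ k :: complex) = 1 / real N ^ k" by (simp add: norm_divide norm_power)
    then show ?thesis by (simp only: nr_sm)
  qed
  also have "\<dots> \<le> (1 / real N ^ k) * (\<Sum>n\<in>?P. bd)"
  proof (rule mult_left_mono)
    have "nr (\<Sum>n\<in>?P. a n) \<le> (\<Sum>n\<in>?P. nr (a n))" by (rule nr_sum)
    also have "\<dots> \<le> (\<Sum>n\<in>?P. bd)" by (rule sum_mono, rule each')
    finally show "nr (\<Sum>n\<in>?P. a n) \<le> (\<Sum>n\<in>?P. bd)" .
  qed simp
  also have "\<dots> \<le> bd"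
  proof (cases "N = 0")
    case True then show ?thesis using k1 bd0 by (simp add: power_0_left)
  next
    case False then show ?thesis unfolding sum_constant card_PiE_N by simp
  qed
  finally show ?thesis unfolding bd_def .
qed

end

context mainl
begin

lemma trunc_limit:
  assumes Qf: "\<And>i. i \<in> {1..2*k} \<Longrightarrow> finite (Qs i)"
    and Qp: "\<And>i. i \<in> {1..2*k} \<Longrightarrow> Qs i \<subseteq> sigma_pp sm U"
  shows "hlim (\<lambda>N. cesT Qs N x) (\<Sum>c\<in>PiE {1..2*k} Qs.
     sm (\<Prod>l\<in>{1..k}. if c (fp k \<alpha> l) * c (sp k \<alpha> l) = 1 then 1 else 0) (alt (2*k) (\<lambda>i. Ep (c i)) Ai x))"
proof -
  let ?C = "PiE {1..2*k} Qs"
  define w where "w c = alt (2*k) (\<lambda>i. Ep (c i)) Ai x" for c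
  define p where "p n c = (\<Prod>i\<in>{1..2*k}. (c i :: complex) ^ (n (\<alpha> i)))" for n c
  have exp: "alt (2*k) (\<lambda>i v. Upw (n (\<alpha> i)) (Pq (Qs i) v)) Ai x = (\<Sum>c\<in>?C. sm (p n c) (w c))" for n
  proof -
    have "(\<lambda>i v. Upw (n (\<alpha> i)) (Pq (Qs i) v)) = (\<lambda>i v. \<Sum>z\<in>Qs i. sm (z ^ (n (\<alpha> i))) (Ep z v))"
      by (simp add: Upw_Pq)
    then show ?thesis unfolding p_def w_def
      using alt_expand[of "2*k" Ai "\<lambda>i z. Ep z" Qs "\<lambda>i z. z ^ (n (\<alpha> i))" x] Ai_lin lin_Ep Qf by simp
  qed
  have ces: "cesT Qs N x = (\<Sum>c\<in>?C. sm ((1 / of_nat N ^ k) * (\<Sum>n\<in>PiE {1..k} (\<lambda>_. {..<N}). p n c)) (w c))" for N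
  proof -
    have "cesT Qs N x = sm (1 / of_nat N ^ k) (\<Sum>n\<in>PiE {1..k} (\<lambda>_. {..<N}). \<Sum>c\<in>?C. sm (p n c) (w c))"
      unfolding cesT_def exp ..
    also have "\<dots> = sm (1 / of_nat N ^ k) (\<Sum>c\<in>?C. \<Sum>n\<in>PiE {1..k} (\<lambda>_. {..<N}). sm (p n c) (w c))"
      by (subst sum.swap) (rule refl)
    also have "\<dots> = (\<Sum>c\<in>?C. sm ((1 / of_nat N ^ k) * (\<Sum>n\<in>PiE {1..k} (\<lambda>_. {..<N}). p n c)) (w c))"
      by (simp add: sm_sum_left[symmetric] sm_sum_right sm_mult[symmetric])
    finally show ?thesis .
  qed
  have lim: "hlim (\<lambda>N. sm ((1 / of_nat N ^ k) * (\<Sum>n\<in>PiE {1..k} (\<lambda>_. {..<N}). p n c)) (w c))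
      (sm (\<Prod>l\<in>{1..k}. if c (fp k \<alpha> l) * c (sp k \<alpha> l) = 1 then 1 else 0) (w c))" if c: "c \<in> ?C" for c
  proof (rule hlim_sm_scalar)
    have "(1 / of_nat N ^ k) * (\<Sum>n\<in>PiE {1..k} (\<lambda>_. {..<N}). p n c) =
        (\<Prod>l\<in>{1..k}. (1 / of_nat N) * (\<Sum>m<N. (c (fp k \<alpha> l) * c (sp k \<alpha> l)) ^ m))" for N
      unfolding p_def by (rule avg_factor[OF pp])
    moreover have "((\<lambda>N. \<Prod>l\<in>{1..k}. (1 / of_nat N) * (\<Sum>m<N. (c (fp k \<alpha> l) * c (sp k \<alpha> l)) ^ m))
        \<longlongrightarrow> (\<Prod>l\<in>{1..k}. if c (fp k \<alpha> l) * c (sp k \<alpha> l) = 1 then 1 else 0)) sequentially"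
    proof (rule tendsto_prod)
      fix l assume l: "l \<in> {1..k}"
      have "c (fp k \<alpha> l) \<in> sigma_pp sm U" "c (sp k \<alpha> l) \<in> sigma_pp sm U"
        using c fp_mem(1)[OF pp l] sp_mem(1)[OF pp l] Qp by (auto simp: PiE_def Pi_def)
      then have "cmod (c (fp k \<alpha> l) * c (sp k \<alpha> l)) \<le> 1" using sigma_unit by (simp add: norm_mult)
      then show "((\<lambda>N. (1 / of_nat N) * (\<Sum>m<N. (c (fp k \<alpha> l) * c (sp k \<alpha> l)) ^ m))
        \<longlongrightarrow> (if c (fp k \<alpha> l) * c (sp k \<alpha> l) = 1 then 1 else 0)) sequentially" by (rule geom_avg)
    qed
    ultimately show "((\<lambda>N. (1 / of_nat N ^ k) * (\<Sum>n\<in>PiE {1..k} (\<lambda>_. {..<N}). p n c)) \<longlongrightarrow>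
        (\<Prod>l\<in>{1..k}. if c (fp k \<alpha> l) * c (sp k \<alpha> l) = 1 then 1 else 0)) sequentially" by simp
  qed
  have "hlim (\<lambda>N. \<Sum>c\<in>?C. sm ((1 / of_nat N ^ k) * (\<Sum>n\<in>PiE {1..k} (\<lambda>_. {..<N}). p n c)) (w c))
     (\<Sum>c\<in>?C. sm (\<Prod>l\<in>{1..k}. if c (fp k \<alpha> l) * c (sp k \<alpha> l) = 1 then 1 else 0) (w c))"
    by (rule hlim_sum, rule lim)
  moreover have "(\<lambda>N. cesT Qs N x) = (\<lambda>N. \<Sum>c\<in>?C. sm ((1 / of_nat N ^ k) * (\<Sum>n\<in>PiE {1..k} (\<lambda>_. {..<N}). p n c)) (w c))"
    using ces by (intro ext)
  ultimately show ?thesis unfolding w_def by simp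
qed

end

lemma prod_ind: "finite I \<Longrightarrow> (\<Prod>l\<in>I. if P l then (1::complex) else 0) = (if \<forall>l\<in>I. P l then 1 else 0)"
  by (induction I rule: finite_induct) auto

context ap
begin

lemma sa_pp: "z \<in> sigma_pp_a sm U \<Longrightarrow> z \<in> sigma_pp sm U"
  unfolding sigma_pp_a_def by blast

lemma sa_cnj: assumes "z \<in> sigma_pp_a sm U" shows "cnj z \<in> sigma_pp sm U" "cnj z \<in> sigma_pp_a sm U"
proof -
  obtain w where w: "w \<in> sigma_pp sm U" "z * w = 1" and z: "z \<in> sigma_pp sm U"
    using assms unfolding sigma_pp_a_def by blast
  have "cnj z * z = 1" using unit_cnj_inv[OF sigma_unit[OF z]] .
  then have "w = cnj z" using w(2) by (metis mult.assoc mult_1_left mult_1_right)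
  then show 1: "cnj z \<in> sigma_pp sm U" using w(1) by simp
  show "cnj z \<in> sigma_pp_a sm U" unfolding sigma_pp_a_def using 1 z \<open>cnj z * z = 1\<close> by blast
qed

lemma sa_intro: "a \<in> sigma_pp sm U \<Longrightarrow> b \<in> sigma_pp sm U \<Longrightarrow> a * b = 1 \<Longrightarrow> a \<in> sigma_pp_a sm U"
  unfolding sigma_pp_a_def by blast

lemma unit_inv_cnj: assumes "cmod a = 1" "a * b = 1" shows "b = cnj a"
proof -
  have "cnj a * a = 1" using unit_cnj_inv[OF assms(1)] .
  then show ?thesis using assms(2) by (metis mult.assoc mult_1_left mult_1_right)
qed

end

context mainl
begin

lemma ident:
  assumes F: "finite F" "F \<subseteq> sigma_pp_a sm U"
    and R: "R \<subseteq> sigma_pp sm U" "R \<inter> sigma_pp_a sm U = {}" "finite R"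
    and Qs: "\<And>i. Qs i = (if first k \<alpha> i then F \<union> R else cnj ` F \<union> R)"
  shows "(\<Sum>c\<in>PiE {1..2*k} Qs. sm (\<Prod>l\<in>{1..k}. if c (fp k \<alpha> l) * c (sp k \<alpha> l) = 1 then 1 else 0)
           (alt (2*k) (\<lambda>i. Ep (c i)) Ai x)) = S_partial sm ip U k \<alpha> A F x"
proof -
  let ?C = "PiE {1..2*k} Qs"
  let ?Z = "PiE {1..k} (\<lambda>_. F)"
  define w where "w c = alt (2*k) (\<lambda>i. Ep (c i)) Ai x" for c
  define good where "good c \<longleftrightarrow> (\<forall>l\<in>{1..k}. c (fp k \<alpha> l) * c (sp k \<alpha> l) = 1)" for c :: "nat \<Rightarrow> complex"
  define \<zeta> where "\<zeta> z = restrict (zsharp k \<alpha> z) {1..2*k}" for z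
  have Fpp: "f \<in> sigma_pp sm U" if "f \<in> F" for f using F(2) sa_pp that by blast
  have Funit: "cmod f = 1" if "f \<in> F" for f using sigma_unit[OF Fpp[OF that]] .
  have zfp: "\<zeta> z (fp k \<alpha> l) = z l" if "l \<in> {1..k}" for z l
    using fp_mem[OF pp that] first_fp[OF pp that] by (simp add: \<zeta>_def zsharp_first)
  have zsp: "\<zeta> z (sp k \<alpha> l) = cnj (z l)" if "l \<in> {1..k}" for z l
    using sp_mem[OF pp that] not_first_sp[OF pp that] by (simp add: \<zeta>_def zsharp_first)
  have 1: "(\<Sum>c\<in>?C. sm (\<Prod>l\<in>{1..k}. if c (fp k \<alpha> l) * c (sp k \<alpha> l) = 1 then 1 else 0) (w c))
      = (\<Sum>c\<in>?C. if good c then w c else 0)"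
    by (intro sum.cong refl) (simp add: prod_ind good_def)
  also have "\<dots> = (\<Sum>c\<in>{c\<in>?C. good c}. w c)"
    by (rule sum.inter_filter[symmetric]) (use Qs F R in \<open>auto intro!: finite_PiE\<close>)
  also have "{c\<in>?C. good c} = \<zeta> ` ?Z"
  proof
    show "\<zeta> ` ?Z \<subseteq> {c\<in>?C. good c}"
    proof
      fix c assume "c \<in> \<zeta> ` ?Z"
      then obtain z where z: "z \<in> ?Z" "c = \<zeta> z" by blast
      have "c \<in> ?C"
      proof -
        have "\<zeta> z i \<in> Qs i" if i: "i \<in> {1..2*k}" for i
        proof -
          have "z (\<alpha> i) \<in> F" using z(1) pp_img[OF pp i] by auto
          then show ?thesis using i unfolding \<zeta>_def Qs zsharp_first by auto
        qed
        then show ?thesis unfolding z(2) \<zeta>_def by auto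
      qed
      moreover have "good c" unfolding good_def z(2)
      proof
        fix l assume l: "l \<in> {1..k}"
        have "z l \<in> F" using z(1) l by auto
        then have "cnj (z l) * z l = 1" using unit_cnj_inv[OF Funit] by blast
        then show "\<zeta> z (fp k \<alpha> l) * \<zeta> z (sp k \<alpha> l) = 1" using zfp[OF l] zsp[OF l] by (simp add: mult.commute)
      qed
      ultimately show "c \<in> {c\<in>?C. good c}" by blast
    qed
  next
    show "{c\<in>?C. good c} \<subseteq> \<zeta> ` ?Z"
    proof
      fix c assume c: "c \<in> {c\<in>?C. good c}"
      then have cC: "c \<in> ?C" and cg: "good c" by auto
      define z where "z = restrict (\<lambda>l. c (fp k \<alpha> l)) {1..k}"
      have cfF: "c (fp k \<alpha> l) \<in> F" if l: "l \<in> {1..k}" for l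
      proof -
        have "c (fp k \<alpha> l) \<in> Qs (fp k \<alpha> l)" by (rule PiE_mem[OF cC fp_mem(1)[OF pp l]])
        then have "c (fp k \<alpha> l) \<in> F \<union> R" using first_fp[OF pp l] unfolding Qs by simp
        moreover have "c (fp k \<alpha> l) \<notin> R"
        proof
          assume cR: "c (fp k \<alpha> l) \<in> R"
          have "c (sp k \<alpha> l) \<in> Qs (sp k \<alpha> l)" by (rule PiE_mem[OF cC sp_mem(1)[OF pp l]])
          then have "c (sp k \<alpha> l) \<in> cnj ` F \<union> R" using not_first_sp[OF pp l] unfolding Qs by simp
          have cnjF: "cnj ` F \<subseteq> sigma_pp sm U"
          proof
            fix y assume "y \<in> cnj ` F"
            then obtain f where "f \<in> F" "y = cnj f" by blast
            then show "y \<in> sigma_pp sm U" using F(2) sa_cnj(1) by blast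
          qed
          have "c (sp k \<alpha> l) \<in> sigma_pp sm U" using \<open>c (sp k \<alpha> l) \<in> cnj ` F \<union> R\<close> cnjF R(1) by blast
          moreover have "c (fp k \<alpha> l) \<in> sigma_pp sm U" using cR R(1) by blast
          moreover have "c (fp k \<alpha> l) * c (sp k \<alpha> l) = 1" using cg l unfolding good_def by blast
          ultimately have "c (fp k \<alpha> l) \<in> sigma_pp_a sm U" by (metis sa_intro)
          then show False using cR R(2) by blast
        qed
        ultimately show ?thesis by blast
      qed
      have zZ: "z \<in> ?Z" unfolding z_def using cfF by auto
      have "\<zeta> z = c"
      proof
        fix i show "\<zeta> z i = c i"
        proof (cases "i \<in> {1..2*k}")
          case False
          then show ?thesis using cC unfolding \<zeta>_def by (auto simp: PiE_def extensional_def)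
        next
          case True
          define l where "l = \<alpha> i"
          have l: "l \<in> {1..k}" unfolding l_def by (rule pp_img[OF pp True])
          have zl: "z l = c (fp k \<alpha> l)" unfolding z_def using l by simp
          from pp_cases[OF pp True] show ?thesis
          proof
            assume "i = fp k \<alpha> (\<alpha> i)"
            then show ?thesis using zfp[OF l, of z] zl unfolding l_def by simp
          next
            assume i: "i = sp k \<alpha> (\<alpha> i)"
            have "c (fp k \<alpha> l) * c (sp k \<alpha> l) = 1" using cg l unfolding good_def by blast
            then have "c (sp k \<alpha> l) = cnj (c (fp k \<alpha> l))" using unit_inv_cnj Funit[OF cfF[OF l]] by blast
            then show ?thesis using zsp[OF l, of z] zl i unfolding l_def by simp
          qed
        qed
      qed
      then show "c \<in> \<zeta> ` ?Z" using zZ by blast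
    qed
  qed
  also have "(\<Sum>c\<in>\<zeta> ` ?Z. w c) = (\<Sum>z\<in>?Z. w (\<zeta> z))"
  proof -
    have "inj_on \<zeta> ?Z"
    proof (rule inj_onI)
      fix z z' assume zz: "z \<in> ?Z" "z' \<in> ?Z" "\<zeta> z = \<zeta> z'"
      show "z = z'"
      proof (rule PiE_ext[OF zz(1,2)])
        fix l assume l: "l \<in> {1..k}"
        show "z l = z' l" using zfp[OF l, of z] zfp[OF l, of z'] zz(3) by simp
      qed
    qed
    then show ?thesis by (simp add: sum.reindex)
  qed
  also have "\<dots> = S_partial sm ip U k \<alpha> A F x"
    unfolding S_partial_def
  proof (rule sum.cong[OF refl])
    fix z assume "z \<in> ?Z"
    have "w (\<zeta> z) = alt (2*k) (\<lambda>i. Ep (zsharp k \<alpha> z i)) Ai x"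
      unfolding w_def by (rule arg_cong[where f = "\<lambda>f. f x"], rule alt_cong) (auto simp: \<zeta>_def)
    then show "w (\<zeta> z) = word k (\<lambda>i. Ep (zsharp k \<alpha> z i)) A x" by (simp add: word_eq)
  qed
  finally show ?thesis unfolding w_def .
qed

end

context mainl
begin

definition Qd :: "complex set \<Rightarrow> complex set \<Rightarrow> nat \<Rightarrow> complex set" where
  "Qd F R i = (if first k \<alpha> i then F \<union> R else cnj ` F \<union> R)"

lemma cnj_sa_sub: "F \<subseteq> sigma_pp_a sm U \<Longrightarrow> cnj ` F \<subseteq> sigma_pp sm U"
proof
  fix y assume F: "F \<subseteq> sigma_pp_a sm U" and "y \<in> cnj ` F"
  then obtain f where "f \<in> F" "y = cnj f" by blast
  then show "y \<in> sigma_pp sm U" using F sa_cnj(1) by blast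
qed

lemma lim_trunc:
  assumes F: "finite F" "F \<subseteq> sigma_pp_a sm U"
    and R: "R \<subseteq> sigma_pp sm U" "R \<inter> sigma_pp_a sm U = {}" "finite R"
  shows "hlim (\<lambda>N. cesT (Qd F R) N x) (S_partial sm ip U k \<alpha> A F x)"
proof -
  have "hlim (\<lambda>N. cesT (Qd F R) N x) (\<Sum>c\<in>PiE {1..2*k} (Qd F R).
     sm (\<Prod>l\<in>{1..k}. if c (fp k \<alpha> l) * c (sp k \<alpha> l) = 1 then 1 else 0) (alt (2*k) (\<lambda>i. Ep (c i)) Ai x))"
  proof (rule trunc_limit)
    fix i
    show "finite (Qd F R i)" using F R by (simp add: Qd_def)
    have "F \<subseteq> sigma_pp sm U" using F(2) sa_pp by blast
    then show "Qd F R i \<subseteq> sigma_pp sm U" using cnj_sa_sub[OF F(2)] R(1) by (auto simp: Qd_def)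
  qed
  also have "(\<Sum>c\<in>PiE {1..2*k} (Qd F R).
     sm (\<Prod>l\<in>{1..k}. if c (fp k \<alpha> l) * c (sp k \<alpha> l) = 1 then 1 else 0) (alt (2*k) (\<lambda>i. Ep (c i)) Ai x))
     = S_partial sm ip U k \<alpha> A F x"
    by (rule ident[OF F R]) (simp add: Qd_def)
  finally show ?thesis .
qed

lemma approx:
  assumes eta: "\<eta> > 0"
  obtains R F0 where "R \<subseteq> sigma_pp sm U" "R \<inter> sigma_pp_a sm U = {}" "finite R"
    "finite F0" "F0 \<subseteq> sigma_pp_a sm U"
    "\<And>F N. finite F \<Longrightarrow> F0 \<subseteq> F \<Longrightarrow> F \<subseteq> sigma_pp_a sm U \<Longrightarrow>
        nr (cesaro sm U k \<alpha> A N x - cesT (Qd F R) N x) \<le> \<eta>"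
proof -
  obtain C where C: "C \<ge> 1" "\<And>i x. i \<in> {1..2*k} \<Longrightarrow> nr (Ai i x) \<le> C * nr x" using Ai_bound by blast
  define \<epsilon> where "\<epsilon> = \<eta> / (real (2*k) * C ^ (2*k))"
  have pos: "real (2*k) * C ^ (2*k) > 0" using C k1 by simp
  then have eps: "\<epsilon> > 0" using eta by (simp add: \<epsilon>_def)
  obtain Q0 where Q0: "finite Q0" "Q0 \<subseteq> sigma_pp sm U"
    "\<And>Q. finite Q \<Longrightarrow> Q0 \<subseteq> Q \<Longrightarrow> (\<forall>w\<in>Sset x. nr (w - Pq Q w) < \<epsilon>)"
    using TB_unif[OF TB_Sset eps] by blast
  define R where "R = Q0 - sigma_pp_a sm U"
  define Fa where "Fa = Q0 \<inter> sigma_pp_a sm U"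
  define F0 where "F0 = Fa \<union> cnj ` Fa"
  have R: "R \<subseteq> sigma_pp sm U" "R \<inter> sigma_pp_a sm U = {}" "finite R" using Q0 by (auto simp: R_def)
  have F0: "finite F0" "F0 \<subseteq> sigma_pp_a sm U"
  proof -
    show "finite F0" using Q0(1) by (simp add: F0_def Fa_def)
    have "cnj ` Fa \<subseteq> sigma_pp_a sm U"
    proof
      fix y assume "y \<in> cnj ` Fa"
      then obtain f where "f \<in> Fa" "y = cnj f" by blast
      then show "y \<in> sigma_pp_a sm U" using sa_cnj(2) unfolding Fa_def by blast
    qed
    then show "F0 \<subseteq> sigma_pp_a sm U" unfolding F0_def Fa_def by blast
  qed
  have main: "nr (cesaro sm U k \<alpha> A N x - cesT (Qd F R) N x) \<le> \<eta>"
    if F: "finite F" "F0 \<subseteq> F" "F \<subseteq> sigma_pp_a sm U" for F N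
  proof -
    have sub: "Q0 \<subseteq> Qd F R i" for i
    proof
      fix z assume z: "z \<in> Q0"
      show "z \<in> Qd F R i"
      proof (cases "z \<in> sigma_pp_a sm U")
        case False then show ?thesis using z by (auto simp: Qd_def R_def)
      next
        case True
        then have zF: "z \<in> F" using z F(2) unfolding F0_def Fa_def by blast
        have "cnj z \<in> F" using z True F(2) unfolding F0_def Fa_def by blast
        then have "z \<in> cnj ` F" by (metis complex_cnj_cnj image_eqI)
        then show ?thesis using zF by (auto simp: Qd_def)
      qed
    qed
    have fin: "finite (Qd F R i)" for i using F(1) R(3) by (simp add: Qd_def)
    have "nr (cesaro sm U k \<alpha> A N x - cesT (Qd F R) N x) \<le> real (2*k) * C ^ (2*k) * \<epsilon>"
    proof (rule err_bound[OF C fin _ less_imp_le[OF eps]])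
      show "nr (w - Pq (Qd F R i) w) \<le> \<epsilon>" if "w \<in> Sset x" for i w
        using Q0(3)[OF fin sub] that less_imp_le by blast
    qed
    also have "real (2*k) * C ^ (2*k) * \<epsilon> = \<eta>"
    proof -
      have "\<And>a b :: real. a > 0 \<Longrightarrow> a * (b / a) = b" by simp
      from this[OF pos, of \<eta>] show ?thesis unfolding \<epsilon>_def .
    qed
    finally show ?thesis .
  qed
  show ?thesis using that[OF R F0 main] by blast
qed

lemma tri3: "nr (a - d) \<le> nr (a - b) + nr (b - c) + nr (c - d)"
proof -
  have "nr (a - d) \<le> nr (a - c) + nr (c - d)" by (rule nr_diff_triangle)
  also have "nr (a - c) \<le> nr (a - b) + nr (b - c)" by (rule nr_diff_triangle)
  finally show ?thesis by simp
qed

lemma ces_conv: "\<exists>L. hlim (\<lambda>N. cesaro sm U k \<alpha> A N x) L"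
proof (rule cauchy_hlim, intro allI impI)
  fix e :: real assume e: "e > 0"
  then have e3: "e / 3 > 0" by simp
  obtain R F0 where R: "R \<subseteq> sigma_pp sm U" "R \<inter> sigma_pp_a sm U = {}" "finite R"
    and F0: "finite F0" "F0 \<subseteq> sigma_pp_a sm U"
    and ap: "\<And>F N. finite F \<Longrightarrow> F0 \<subseteq> F \<Longrightarrow> F \<subseteq> sigma_pp_a sm U \<Longrightarrow>
        nr (cesaro sm U k \<alpha> A N x - cesT (Qd F R) N x) \<le> e / 3"
    using approx[OF e3] by metis
  have "hlim (\<lambda>N. cesT (Qd F0 R) N x) (S_partial sm ip U k \<alpha> A F0 x)" by (rule lim_trunc[OF F0 R])
  from hlim_cauchy[OF this] e3 obtain M where M: "\<forall>m\<ge>M. \<forall>n\<ge>M. nr (cesT (Qd F0 R) m x - cesT (Qd F0 R) n x) < e / 3"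
    by blast
  have "nr (cesaro sm U k \<alpha> A m x - cesaro sm U k \<alpha> A n x) < e" if "m \<ge> M" "n \<ge> M" for m n
  proof -
    have "nr (cesaro sm U k \<alpha> A m x - cesaro sm U k \<alpha> A n x) \<le>
       nr (cesaro sm U k \<alpha> A m x - cesT (Qd F0 R) m x) + nr (cesT (Qd F0 R) m x - cesT (Qd F0 R) n x)
       + nr (cesT (Qd F0 R) n x - cesaro sm U k \<alpha> A n x)" by (rule tri3)
    moreover have "nr (cesaro sm U k \<alpha> A m x - cesT (Qd F0 R) m x) \<le> e / 3" using ap[OF F0(1) order_refl F0(2)] .
    moreover have "nr (cesT (Qd F0 R) n x - cesaro sm U k \<alpha> A n x) \<le> e / 3"
      using ap[OF F0(1) order_refl F0(2), of n] nr_minus_commute by metis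
    moreover have "nr (cesT (Qd F0 R) m x - cesT (Qd F0 R) n x) < e / 3" using M that by blast
    ultimately show ?thesis by linarith
  qed
  then show "\<exists>M. \<forall>m\<ge>M. \<forall>n\<ge>M. nr (cesaro sm U k \<alpha> A m x - cesaro sm U k \<alpha> A n x) < e" by blast
qed

definition Lf :: "'a \<Rightarrow> 'a" where "Lf x = (SOME L. hlim (\<lambda>N. cesaro sm U k \<alpha> A N x) L)"

lemma Lf: "hlim (\<lambda>N. cesaro sm U k \<alpha> A N x) (Lf x)"
  unfolding Lf_def using ces_conv by (rule someI_ex)

lemma S_close:
  assumes eta: "\<eta> > 0"
  shows "\<exists>F0. finite F0 \<and> F0 \<subseteq> sigma_pp_a sm U \<and>
     (\<forall>F. finite F \<and> F0 \<subseteq> F \<and> F \<subseteq> sigma_pp_a sm U \<longrightarrow> nr (S_partial sm ip U k \<alpha> A F x - Lf x) \<le> \<eta>)"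
proof -
  obtain R F0 where R: "R \<subseteq> sigma_pp sm U" "R \<inter> sigma_pp_a sm U = {}" "finite R"
    and F0: "finite F0" "F0 \<subseteq> sigma_pp_a sm U"
    and ap: "\<And>F N. finite F \<Longrightarrow> F0 \<subseteq> F \<Longrightarrow> F \<subseteq> sigma_pp_a sm U \<Longrightarrow>
        nr (cesaro sm U k \<alpha> A N x - cesT (Qd F R) N x) \<le> \<eta>"
    using approx[OF eta] by metis
  have "nr (S_partial sm ip U k \<alpha> A F x - Lf x) \<le> \<eta>" if F: "finite F" "F0 \<subseteq> F" "F \<subseteq> sigma_pp_a sm U" for F
  proof (rule nr_le_eps)
    fix d :: real assume d: "d > 0"
    then have d2: "d / 2 > 0" by simp
    have l1: "hlim (\<lambda>N. cesT (Qd F R) N x) (S_partial sm ip U k \<alpha> A F x)" by (rule lim_trunc[OF F(1,3) R])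
    obtain M1 where M1: "\<forall>n\<ge>M1. nr (cesT (Qd F R) n x - S_partial sm ip U k \<alpha> A F x) < d / 2"
      using l1 d2 unfolding hlim_iff by blast
    obtain M2 where M2: "\<forall>n\<ge>M2. nr (cesaro sm U k \<alpha> A n x - Lf x) < d / 2"
      using Lf d2 unfolding hlim_iff by blast
    define n where "n = max M1 M2"
    have "nr (S_partial sm ip U k \<alpha> A F x - Lf x) \<le>
      nr (S_partial sm ip U k \<alpha> A F x - cesT (Qd F R) n x) + nr (cesT (Qd F R) n x - cesaro sm U k \<alpha> A n x)
      + nr (cesaro sm U k \<alpha> A n x - Lf x)" by (rule tri3)
    moreover have "nr (S_partial sm ip U k \<alpha> A F x - cesT (Qd F R) n x) < d / 2"
      using M1 nr_minus_commute unfolding n_def by (metis max.cobounded1)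
    moreover have "nr (cesT (Qd F R) n x - cesaro sm U k \<alpha> A n x) \<le> \<eta>"
      using ap[OF F, of n] nr_minus_commute by metis
    moreover have "nr (cesaro sm U k \<alpha> A n x - Lf x) < d / 2" using M2 unfolding n_def by simp
    ultimately show "nr (S_partial sm ip U k \<alpha> A F x - Lf x) \<le> \<eta> + d" by linarith
  qed
  then show ?thesis using F0 by blast
qed

lemma Lf_weak: "((\<lambda>F. ip (S_partial sm ip U k \<alpha> A F x) y) \<longlongrightarrow> ip (Lf x) y) (finite_subsets_at_top (sigma_pp_a sm U))"
proof (rule tendstoI)
  fix e :: real assume e: "e > 0"
  define \<eta> where "\<eta> = e / (nr y + 1)"
  have ny: "nr y + 1 > 0" using nr_ge0[of y] by linarith
  have eta: "\<eta> > 0" unfolding \<eta>_def by (rule divide_pos_pos[OF e ny])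
  obtain F0 where F0: "finite F0" "F0 \<subseteq> sigma_pp_a sm U"
    "\<forall>F. finite F \<and> F0 \<subseteq> F \<and> F \<subseteq> sigma_pp_a sm U \<longrightarrow> nr (S_partial sm ip U k \<alpha> A F x - Lf x) \<le> \<eta>"
    using S_close[OF eta, of x] by (elim exE conjE)
  show "\<forall>\<^sub>F F in finite_subsets_at_top (sigma_pp_a sm U). dist (ip (S_partial sm ip U k \<alpha> A F x) y) (ip (Lf x) y) < e"
    unfolding eventually_finite_subsets_at_top
  proof (intro exI[of _ F0] conjI allI impI)
    fix F assume F: "finite F \<and> F0 \<subseteq> F \<and> F \<subseteq> sigma_pp_a sm U"
    have "dist (ip (S_partial sm ip U k \<alpha> A F x) y) (ip (Lf x) y) = cmod (ip (S_partial sm ip U k \<alpha> A F x - Lf x) y)"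
      by (simp add: dist_norm ip_diff_left)
    also have "\<dots> \<le> nr (S_partial sm ip U k \<alpha> A F x - Lf x) * nr y" by (rule cauchy_schwarz)
    also have "\<dots> \<le> \<eta> * nr y" using F0(3) F by (intro mult_right_mono) auto
    also have "\<dots> < e"
    proof -
      have eq1: "\<eta> * nr y = e * (nr y / (nr y + 1))" by (simp add: \<eta>_def)
      have "nr y / (nr y + 1) < 1" using ny by simp
      then have "e * (nr y / (nr y + 1)) < e * 1" using e by (intro mult_strict_left_mono) auto
      then show ?thesis using eq1 by simp
    qed
    finally show "dist (ip (S_partial sm ip U k \<alpha> A F x) y) (ip (Lf x) y) < e" .
  qed (use F0 in auto)
qed

lemma S_op_eq: "S_op sm ip U k \<alpha> A = Lf"
  unfolding S_op_def
proof (rule the_equality)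
  show "\<forall>x y. ((\<lambda>F. ip (S_partial sm ip U k \<alpha> A F x) y) \<longlongrightarrow> ip (Lf x) y) (finite_subsets_at_top (sigma_pp_a sm U))"
    using Lf_weak by blast
next
  fix S assume S: "\<forall>x y. ((\<lambda>F. ip (S_partial sm ip U k \<alpha> A F x) y) \<longlongrightarrow> ip (S x) y) (finite_subsets_at_top (sigma_pp_a sm U))"
  show "S = Lf"
  proof
    fix x
    have "ip (S x - Lf x) y = 0" for y
    proof -
      have "ip (S x) y = ip (Lf x) y"
        using tendsto_unique[OF finite_subsets_at_top_neq_bot S[rule_format, of x y] Lf_weak[of x y]] .
      then show ?thesis by (simp add: ip_diff_left)
    qed
    then have "S x - Lf x = 0" by (rule ip_eq_zero_all)
    then show "S x = Lf x" by simp
  qed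
qed

theorem main_conv: "((\<lambda>N. nr (cesaro sm U k \<alpha> A N x - S_op sm ip U k \<alpha> A x)) \<longlongrightarrow> 0) sequentially"
  using Lf[of x] unfolding S_op_eq hlim_def .

end

theorem theorem3p1:
  fixes sm :: "complex \<Rightarrow> 'a::ab_group_add \<Rightarrow> 'a"
    and ip :: "'a \<Rightarrow> 'a \<Rightarrow> complex"
    and U :: "'a \<Rightarrow> 'a"
    and k :: nat and \<alpha> :: "nat \<Rightarrow> nat" and A :: "nat \<Rightarrow> 'a \<Rightarrow> 'a"
  assumes "hilbert_space sm ip"
    and "unitary_op sm ip U"
    and "almost_periodic sm ip U"
    and "k \<ge> 1"
    and "pair_partition k \<alpha>"
    and "\<forall>i\<in>{1..2*k-1}. bounded_op sm ip (A i)"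
  shows "\<forall>x. ((\<lambda>N. hnorm ip (cesaro sm U k \<alpha> A N x - S_op sm ip U k \<alpha> A x)) \<longlongrightarrow> 0) sequentially"
proof -
  interpret m: mainl sm ip U k \<alpha> A
    by unfold_locales (use assms in auto)
  show ?thesis using m.main_conv by blast
qed

end
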